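(* Let $q>1$, $0<u<1$ and let $n\ge0$ be an integer. Run the following procedure. Start with $N=1$, $\lambda$ the empty partition, and a counter $r=n$. Step 1: if $r=0$ go to Step 3; otherwise set $h=1-q^{-r}$. Step 2: flip a (fresh, independent) coin with heads probability $h$. If tails, set $N\leftarrow N+1$ and repeat Step 2. If heads, set $r\leftarrow r-1$, choose a column $S$ with $\Pr(S=1)=\frac{q^{N-\lambda'_1}-1}{q^N-1}$ and $\Pr(S=s)=\frac{q^{N-\lambda'_s}-q^{N-\lambda'_{s-1}}}{q^N-1}$ for $s>1$, add a box to column $S$ of $\lambda$, and go to Step 1. Step 3: choose $S$ with $\Pr(S=1)=q^{-\lambda'_1}$ and $\Pr(S=s)=q^{-\lambda'_s}-q^{-\lambda'_{s-1}}$ for $s>1$, add a box to column $S$, and output $\lambda$. Then the output is distributed according to $N_{u,q}$ conditioned on $|\lambda|=n+1$.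
   Context: $\lambda'_s$ is the length of column $s$ of the diagram of $\lambda$; adding a box to column $s$ increases $\lambda'_s$ by one. $N_{u,q}(\lambda)=\prod_{r\ge1}(1-u/q^r)\frac{u^{|\lambda|-1}(q^{\lambda'_1}-1)}{\prod_i q^{(\lambda'_i)^2}(\frac1q)_{m_i(\lambda)}}$ for partitions $\lambda$ of positive integers, where $m_i(\lambda)$ is the multiplicity of part $i$ and $(\frac1q)_i=\prod_{j=1}^i(1-q^{-j})$. *)

theory Defs
  imports "HOL-Analysis.Analysis"
begin

definition partitions_of :: "nat \<Rightarrow> nat list set" where
  "partitions_of m = {xs. sorted_wrt (\<ge>) xs \<and> 0 \<notin> set xs \<and> sum_list xs = m}"

text \<open>Largest part (= number of columns); 0 for the empty partition.\<close>
definition first_part :: "nat list \<Rightarrow> nat" where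
  "first_part lam = Max (insert 0 (set lam))"

text \<open>Length of column s (s \<ge> 1) of the diagram: number of parts \<ge> s.\<close>
definition col_len :: "nat list \<Rightarrow> nat \<Rightarrow> nat" where
  "col_len lam s = length (filter (\<lambda>x. s \<le> x) lam)"

text \<open>Add a box to column s: it goes into row (col_len lam s + 1).\<close>
definition add_box :: "nat list \<Rightarrow> nat \<Rightarrow> nat list" where
  "add_box lam s = (let i = col_len lam s in
     if i < length lam then lam[i := lam ! i + 1] else lam @ [1])"

definition qpoch_inv :: "real \<Rightarrow> nat \<Rightarrow> real" where
  "qpoch_inv q m = (\<Prod>j\<in>{1..m}. 1 - q powi (- int j))"

definition Nuq :: "real \<Rightarrow> real \<Rightarrow> nat list \<Rightarrow> real" where
  "Nuq u q lam =
     prodinf (\<lambda>r. 1 - u / q ^ (Suc r)) *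
     (u ^ (sum_list lam - 1) * (q ^ col_len lam 1 - 1) /
      (\<Prod>i\<in>{1..first_part lam}. q ^ ((col_len lam i)\<^sup>2) * qpoch_inv q (count_list lam i)))"

definition step2_prob :: "real \<Rightarrow> nat \<Rightarrow> nat list \<Rightarrow> nat \<Rightarrow> real" where
  "step2_prob q N lam s =
     (if s = 1 then (q powi (int N - int (col_len lam 1)) - 1) / (q ^ N - 1)
      else (q powi (int N - int (col_len lam s)) - q powi (int N - int (col_len lam (s - 1))))
             / (q ^ N - 1))"

definition step3_prob :: "real \<Rightarrow> nat list \<Rightarrow> nat \<Rightarrow> real" where
  "step3_prob q lam s =
     (if s = 1 then q powi (- int (col_len lam 1))
      else q powi (- int (col_len lam s)) - q powi (- int (col_len lam (s - 1))))"

text \<open>proc_prob q r N lam mu: probability that the procedure, started in the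
  state (counter r, value N, partition lam) at Step 1, outputs mu.
  Columns s > first_part lam + 1 have probability 0 in both steps, so the column
  sums range over 1..first_part lam + 1.  In Step 2 the event "k tails then heads"
  has probability (q^{-r})^k (1 - q^{-r}) and leaves N increased by k.\<close>
fun proc_prob :: "real \<Rightarrow> nat \<Rightarrow> nat \<Rightarrow> nat list \<Rightarrow> nat list \<Rightarrow> real" where
  "proc_prob q 0 N lam mu =
     (\<Sum>s\<in>{1..Suc (first_part lam)}. step3_prob q lam s * (if add_box lam s = mu then 1 else 0))"
| "proc_prob q (Suc r) N lam mu =
     (\<Sum>k. (q powi (- int (Suc r))) ^ k * (1 - q powi (- int (Suc r))) *
        (\<Sum>s\<in>{1..Suc (first_part lam)}.
            step2_prob q (N + k) lam s * proc_prob q r (N + k) (add_box lam s) mu))"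

end

theory Submission
  imports Defs
begin

definition ispart :: "nat list \<Rightarrow> bool" where
  "ispart xs \<longleftrightarrow> sorted_wrt (\<ge>) xs \<and> 0 \<notin> set xs"

lemma partitions_of_iff: "xs \<in> partitions_of m \<longleftrightarrow> ispart xs \<and> sum_list xs = m"
  by (simp add: partitions_of_def ispart_def)

lemma col_len_sorted:
  assumes "sorted_wrt (\<ge>) xs" "k < length xs"
  shows "(t \<le> xs ! k) \<longleftrightarrow> k < col_len xs t"
  using assms
proof (induction xs arbitrary: k)
  case Nil then show ?case by simp
next
  case (Cons a ys)
  show ?case
  proof (cases "t \<le> a")
    case True
    then show ?thesis using Cons by (cases k) (auto simp: col_len_def)
  next
    case False
    have "filter (\<lambda>x. t \<le> x) ys = []" using Cons.prems False
      by (auto simp: filter_empty_conv)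
    moreover have "\<not> t \<le> (a # ys) ! k" using Cons.prems False
      by (cases k) (auto simp: set_conv_nth)
    ultimately show ?thesis using False by (simp add: col_len_def)
  qed
qed

lemma col_len_le_length: "col_len xs t \<le> length xs"
  by (simp add: col_len_def)

lemma col_len_one: "0 \<notin> set xs \<Longrightarrow> col_len xs 1 = length xs"
  unfolding col_len_def by (induction xs) auto

lemma col_len_mono: "t \<le> t' \<Longrightarrow> col_len xs t' \<le> col_len xs t"
  unfolding col_len_def by (induction xs) auto

lemma col_len_count: "col_len xs i = col_len xs (Suc i) + count_list xs i"
  unfolding col_len_def by (induction xs) auto

lemma col_len_pos_iff: "1 \<le> t \<Longrightarrow> (0 < col_len xs t \<longleftrightarrow> t \<le> first_part xs)"
proof -
  assume "1 \<le> t"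
  have "0 < col_len xs t \<longleftrightarrow> (\<exists>x\<in>set xs. t \<le> x)"
    unfolding col_len_def by (induction xs) auto
  also have "\<dots> \<longleftrightarrow> t \<le> first_part xs"
  proof
    assume "\<exists>x\<in>set xs. t \<le> x"
    then show "t \<le> first_part xs" unfolding first_part_def
      by (meson Max_ge finite_insert finite_set insertCI order_trans)
  next
    assume "t \<le> first_part xs"
    then have "first_part xs \<noteq> 0" using \<open>1 \<le> t\<close> by auto
    then have "first_part xs \<in> set xs" unfolding first_part_def
      by (metis Max_in empty_not_insert finite_insert finite_set insertE)
    then show "\<exists>x\<in>set xs. t \<le> x" using \<open>t \<le> first_part xs\<close> by blast
  qed
  finally show ?thesis .
qed

lemma col_len_zero_beyond: "first_part xs < t \<Longrightarrow> col_len xs t = 0"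
  using col_len_pos_iff[of t xs] by auto

lemma length_filter_update:
  "i < length xs \<Longrightarrow> length (filter P (xs[i := v])) + (if P (xs ! i) then 1 else 0)
     = length (filter P xs) + (if P v then 1 else 0)"
proof (induction xs arbitrary: i)
  case Nil then show ?case by simp
next
  case (Cons a xs) then show ?case by (cases i) auto
qed

lemma sum_list_update_nat:
  "i < length xs \<Longrightarrow> sum_list (xs[i := v]) + xs ! i = sum_list xs + (v::nat)"
proof (induction xs arbitrary: i)
  case Nil then show ?case by simp
next
  case (Cons a xs) then show ?case by (cases i) auto
qed

lemma col_len_update:
  "i < length xs \<Longrightarrow> col_len (xs[i := v]) t + (if t \<le> xs ! i then 1 else 0)
     = col_len xs t + (if t \<le> v then 1 else 0)"
  unfolding col_len_def by (rule length_filter_update)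

definition addable :: "nat list \<Rightarrow> nat \<Rightarrow> bool" where
  "addable lam s \<longleftrightarrow> 1 \<le> s \<and> (s = 1 \<or> col_len lam s < col_len lam (s - 1))"

definition corner :: "nat list \<Rightarrow> nat \<Rightarrow> bool" where
  "corner nu s \<longleftrightarrow> 1 \<le> s \<and> col_len nu (Suc s) < col_len nu s"

lemma add_box_props:
  assumes P: "ispart lam" and A: "addable lam s"
  shows "ispart (add_box lam s)" "sum_list (add_box lam s) = Suc (sum_list lam)"
    "\<And>t. 1 \<le> t \<Longrightarrow> col_len (add_box lam s) t = col_len lam t + (if t = s then 1 else 0)"
proof -
  have so: "sorted_wrt (\<ge>) lam" and nz: "0 \<notin> set lam" using P by (auto simp: ispart_def)
  have "(ispart (add_box lam s) \<and> sum_list (add_box lam s) = Suc (sum_list lam)) \<and>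
     (\<forall>t. 1 \<le> t \<longrightarrow> col_len (add_box lam s) t = col_len lam t + (if t = s then 1 else 0))"
  proof (cases "s = 1")
    case True
    then have ab: "add_box lam s = lam @ [1]"
      using col_len_one[OF nz] by (simp add: add_box_def)
    have "\<forall>x\<in>set lam. 1 \<le> x" using nz by (metis less_one not_less)
    then show ?thesis unfolding ab using so nz True
      by (auto simp: ispart_def sorted_wrt_append col_len_def)
  next
    case False
    then have s2: "2 \<le> s" and lt: "col_len lam s < col_len lam (s - 1)" using A
      by (auto simp: addable_def)
    define i where "i = col_len lam s"
    have il: "i < length lam" using lt col_len_le_length[of lam "s-1"] i_def by linarith
    have ab: "add_box lam s = lam[i := lam ! i + 1]"
      using il by (simp add: add_box_def i_def Let_def)
    have n1: "\<not> s \<le> lam ! i" using col_len_sorted[OF so il, of s] i_def by simp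
    have n2: "s - 1 \<le> lam ! i" using col_len_sorted[OF so il, of "s-1"] i_def lt by simp
    have li: "lam ! i = s - 1" using n1 n2 by simp
    have ab2: "add_box lam s = lam[i := s]" using ab li s2 by simp
    have sorted: "sorted_wrt (\<ge>) (lam[i := s])"
      unfolding sorted_wrt_iff_nth_less
    proof (intro allI impI)
      fix a b assume ab: "a < b" "b < length (lam[i := s])"
      have old: "lam ! b \<le> lam ! a" using so ab by (auto simp: sorted_wrt_iff_nth_less)
      show "lam[i := s] ! b \<le> lam[i := s] ! a"
      proof (cases "a = i")
        case True
        then show ?thesis using ab old li by (auto simp: nth_list_update)
      next
        case False
        note aF = False
        show ?thesis
        proof (cases "b = i")
          case True
          have "a < col_len lam s" using ab True i_def by simp
          then have "s \<le> lam ! a" using col_len_sorted[OF so, of a s] ab by simp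
          then show ?thesis using True aF ab by (simp add: nth_list_update)
        next
          case False
          then show ?thesis using aF old ab by (simp add: nth_list_update)
        qed
      qed
    qed
    have "0 \<notin> set (lam[i := s])" using set_update_subset_insert[of lam i s] nz s2 by auto
    moreover have "sum_list (lam[i := s]) = Suc (sum_list lam)"
      using sum_list_update_nat[OF il, of s] li s2 by simp
    moreover have "col_len (lam[i := s]) t = col_len lam t + (if t = s then 1 else 0)" if "1 \<le> t" for t
      using col_len_update[OF il, where v=s and t=t] li s2 that by (auto split: if_splits)
    ultimately show ?thesis using sorted unfolding ab2 ispart_def by auto
  qed
  then show "ispart (add_box lam s)" "sum_list (add_box lam s) = Suc (sum_list lam)"
    "\<And>t. 1 \<le> t \<Longrightarrow> col_len (add_box lam s) t = col_len lam t + (if t = s then 1 else 0)"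
    by auto
qed

lemma part_eqI:
  assumes "ispart a" "ispart b" "\<And>t. 1 \<le> t \<Longrightarrow> col_len a t = col_len b t"
  shows "a = b"
proof -
  have sa: "sorted_wrt (\<ge>) a" and sb: "sorted_wrt (\<ge>) b" and za: "0 \<notin> set a" and zb: "0 \<notin> set b"
    using assms by (auto simp: ispart_def)
  have len: "length a = length b"
    using assms(3)[of 1] col_len_one[OF za] col_len_one[OF zb] by simp
  show ?thesis
  proof (rule nth_equalityI[OF len])
    fix k assume k: "k < length a"
    have kb: "k < length b" using k len by simp
    have pa: "a ! k \<ge> 1" using za k by (metis in_set_conv_nth less_one not_less)
    have pb: "b ! k \<ge> 1" using zb kb by (metis in_set_conv_nth less_one not_less)
    have "a ! k \<le> b ! k"
      using col_len_sorted[OF sa k, of "a!k"] col_len_sorted[OF sb kb, of "a!k"] assms(3)[OF pa] by simp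
    moreover have "b ! k \<le> a ! k"
      using col_len_sorted[OF sa k, of "b!k"] col_len_sorted[OF sb kb, of "b!k"] assms(3)[OF pb] by simp
    ultimately show "a ! k = b ! k" by simp
  qed
qed

lemma remove_box_exists:
  assumes P: "ispart nu" and C: "corner nu s"
  shows "\<exists>lam. ispart lam \<and> addable lam s \<and> add_box lam s = nu \<and> Suc (sum_list lam) = sum_list nu"
proof -
  have so: "sorted_wrt (\<ge>) nu" and nz: "0 \<notin> set nu" using P by (auto simp: ispart_def)
  have s1: "1 \<le> s" and cl: "col_len nu (Suc s) < col_len nu s" using C by (auto simp: corner_def)
  define r where "r = col_len nu s - 1"
  have rl: "r < length nu" using cl col_len_le_length[of nu s] r_def by linarith
  have "s \<le> nu ! r" using col_len_sorted[OF so rl, of s] r_def cl by simp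
  moreover have "\<not> Suc s \<le> nu ! r" using col_len_sorted[OF so rl, of "Suc s"] r_def cl by simp
  ultimately have nr: "nu ! r = s" by simp
  show ?thesis
  proof (cases "s = 1")
    case True
    have rlast: "r = length nu - 1" unfolding r_def True col_len_one[OF nz] by (rule refl)
    have ne: "nu \<noteq> []" using rl by auto
    have "last nu = 1" using last_conv_nth[OF ne] rlast nr True by simp
    then have nuu: "butlast nu @ [1] = nu" using append_butlast_last_id[OF ne] by simp
    define l where "l = butlast nu"
    have "sorted_wrt (\<ge>) (butlast nu @ [1])" using so nuu by simp
    then have "sorted_wrt (\<ge>) l" unfolding l_def by (simp add: sorted_wrt_append)
    moreover have "0 \<notin> set l" unfolding l_def using nz by (auto dest: in_set_butlastD)
    ultimately have lp: "ispart l" by (simp add: ispart_def)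
    have cl1: "col_len l 1 = length l" by (rule col_len_one) fact
    have "add_box l 1 = l @ [1]" unfolding add_box_def Let_def cl1 by simp
    then have ab: "add_box l 1 = nu" using nuu l_def by simp
    have "sum_list nu = Suc (sum_list l)" using nuu l_def by (metis One_nat_def add_Suc_right add_cancel_right_right sum_list_append sum_list_simps(1) sum_list_simps(2))
    then show ?thesis using lp ab True by (intro exI[of _ l]) (simp add: addable_def)
  next
    case False
    define lam where "lam = nu[r := s - 1]"
    have s2: "2 \<le> s" using False s1 by simp
    have sorted: "sorted_wrt (\<ge>) lam"
      unfolding sorted_wrt_iff_nth_less lam_def
    proof (intro allI impI)
      fix a b assume ab: "a < b" "b < length (nu[r := s - 1])"
      have old: "nu ! b \<le> nu ! a" using so ab by (auto simp: sorted_wrt_iff_nth_less)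
      show "nu[r := s - 1] ! b \<le> nu[r := s - 1] ! a"
      proof (cases "a = r")
        case True
        have "\<not> b < col_len nu s" using ab True r_def by simp
        then have "\<not> s \<le> nu ! b" using col_len_sorted[OF so, of b s] ab by simp
        then show ?thesis using True ab by (auto simp: nth_list_update)
      next
        case False
        note aF = False
        show ?thesis
        proof (cases "b = r")
          case True
          then show ?thesis using aF ab old nr by (simp add: nth_list_update)
        next
          case False
          then show ?thesis using aF old ab by (simp add: nth_list_update)
        qed
      qed
    qed
    have "0 \<notin> set lam" unfolding lam_def using set_update_subset_insert[of nu r "s-1"] nz s2 by auto
    then have lp: "ispart lam" using sorted by (simp add: ispart_def)
    have clam: "col_len lam t + (if t = s then 1 else 0) = col_len nu t" if "1 \<le> t" for t
    proof -
      have u: "col_len lam t + (if t \<le> s then 1 else 0) = col_len nu t + (if t \<le> s - 1 then 1 else 0)"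
        using col_len_update[OF rl, where v="s-1" and t=t] nr unfolding lam_def by simp
      show ?thesis
      proof (cases "t = s")
        case True then show ?thesis using u s2 by simp
      next
        case False
        then have "(t \<le> s) = (t \<le> s - 1)" by auto
        then show ?thesis using u False by simp
      qed
    qed
    have "col_len nu s \<le> col_len nu (s - 1)" by (rule col_len_mono) simp
    moreover have "col_len lam (s - 1) = col_len nu (s - 1)" using clam[of "s-1"] s2 by (simp add: Suc_le_eq split: if_splits)
    ultimately have ad: "addable lam s" using clam[of s] s2 by (simp add: addable_def)
    have "add_box lam s = nu"
      by (rule part_eqI) (use add_box_props[OF lp ad] P clam in auto)
    moreover have "Suc (sum_list lam) = sum_list nu"
      using sum_list_update_nat[OF rl, of "s-1"] nr s2 unfolding lam_def by simp
    ultimately show ?thesis using lp ad by blast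
  qed
qed

lemma pw_neg: "(q::real) powi (- int j) = 1 / q ^ j"
  by (simp add: power_int_minus divide_inverse)

lemma pw_diff: "(q::real) \<noteq> 0 \<Longrightarrow> q powi (int a - int b) = q ^ a / q ^ b"
  by (simp add: power_int_diff)

lemma qpoch_inv_0 [simp]: "qpoch_inv q 0 = 1"
  by (simp add: qpoch_inv_def)

lemma qpoch_inv_Suc: "qpoch_inv q (Suc m) = qpoch_inv q m * (1 - 1 / q ^ Suc m)"
  unfolding qpoch_inv_def by (simp add: prod.cl_ivl_Suc pw_neg del: of_nat_Suc)

lemma qpoch_inv_pos: "(q::real) > 1 \<Longrightarrow> qpoch_inv q m > 0"
proof (induction m)
  case 0 then show ?case by simp
next
  case (Suc m)
  have "1 < q ^ Suc m" using Suc.prems by (rule one_less_power) simp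
  then have "1 / q ^ Suc m < 1" by simp
  then show ?case using Suc by (simp add: qpoch_inv_Suc)
qed

lemma qpoch_inv_nz: "(q::real) > 1 \<Longrightarrow> qpoch_inv q m \<noteq> 0"
  using qpoch_inv_pos[of q m] by linarith

definition fa :: "real \<Rightarrow> (nat \<Rightarrow> nat) \<Rightarrow> nat \<Rightarrow> real" where
  "fa q c i = q ^ ((c i)\<^sup>2) * qpoch_inv q (c i - c (Suc i))"

definition autq :: "real \<Rightarrow> nat list \<Rightarrow> real" where
  "autq q lam = (\<Prod>i\<in>{1..first_part lam}. q ^ ((col_len lam i)\<^sup>2) * qpoch_inv q (count_list lam i))"

lemma count_eq: "count_list xs i = col_len xs i - col_len xs (Suc i)"
  using col_len_count[of xs i] by simp

lemma autq_ext:
  assumes "first_part lam \<le> L"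
  shows "autq q lam = (\<Prod>i\<in>{1..L}. fa q (col_len lam) i)"
proof -
  have "autq q lam = (\<Prod>i\<in>{1..first_part lam}. fa q (col_len lam) i)"
    unfolding autq_def fa_def
    by (rule prod.cong) (auto simp: count_eq)
  also have "\<dots> = (\<Prod>i\<in>{1..L}. fa q (col_len lam) i)"
  proof (rule prod.mono_neutral_left)
    show "\<forall>i\<in>{1..L} - {1..first_part lam}. fa q (col_len lam) i = 1"
      by (auto simp: fa_def col_len_zero_beyond)
  qed (use assms in auto)
  finally show ?thesis .
qed

lemma autq_pos: "(q::real) > 1 \<Longrightarrow> autq q lam > 0"
  unfolding autq_def by (intro prod_pos) (auto intro: mult_pos_pos qpoch_inv_pos)

lemma prod_change1:
  assumes "finite A" "a \<in> A" "\<And>i. i \<in> A \<Longrightarrow> i \<noteq> a \<Longrightarrow> f i = g i"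
  shows "prod f A * (g a :: real) = prod g A * f a"
proof -
  have "prod f A = f a * prod f (A - {a})" "prod g A = g a * prod g (A - {a})"
    using assms by (auto simp: prod.remove)
  moreover have "prod f (A - {a}) = prod g (A - {a})" using assms by (intro prod.cong) auto
  ultimately show ?thesis by simp
qed

lemma prod_change2:
  assumes "finite A" "a \<in> A" "b \<in> A" "a \<noteq> b" "\<And>i. i \<in> A \<Longrightarrow> i \<noteq> a \<Longrightarrow> i \<noteq> b \<Longrightarrow> f i = g i"
  shows "prod f A * ((g a :: real) * g b) = prod g A * (f a * f b)"
proof -
  have "prod f A = f a * prod f (A - {a})" "prod g A = g a * prod g (A - {a})"
    using assms by (auto simp: prod.remove)
  moreover have "prod f (A - {a}) = f b * prod f (A - {a} - {b})" "prod g (A - {a}) = g b * prod g (A - {a} - {b})"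
    using assms prod.remove[of "A - {a}" b f] prod.remove[of "A - {a}" b g] by auto
  moreover have "prod f (A - {a} - {b}) = prod g (A - {a} - {b})" using assms by (intro prod.cong) auto
  ultimately show ?thesis by simp
qed

lemma addable_le_fp: "addable lam s \<Longrightarrow> s \<le> Suc (first_part lam)"
proof -
  assume a: "addable lam s"
  show ?thesis
  proof (cases "s = 1")
    case False
    then have c: "0 < col_len lam (s - 1)" and s2: "2 \<le> s" using a by (auto simp: addable_def)
    have "1 \<le> s - 1" using s2 by simp
    then have "s - 1 \<le> first_part lam" using col_len_pos_iff[of "s-1" lam] c by simp
    then show ?thesis by simp
  qed simp
qed

lemma fp_add_box:
  assumes "ispart lam" "addable lam s"
  shows "first_part (add_box lam s) \<le> Suc (first_part lam)"
proof (rule ccontr)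
  assume "\<not> ?thesis"
  then have "Suc (Suc (first_part lam)) \<le> first_part (add_box lam s)" by simp
  then have "0 < col_len (add_box lam s) (Suc (Suc (first_part lam)))"
    using col_len_pos_iff by simp
  moreover have "col_len (add_box lam s) (Suc (Suc (first_part lam))) = 0"
    using add_box_props(3)[OF assms, of "Suc (Suc (first_part lam))"] addable_le_fp[OF assms(2)]
      col_len_zero_beyond[of lam "Suc (Suc (first_part lam))"] by simp
  ultimately show False by simp
qed

lemma sq_Suc: "q ^ ((Suc c)\<^sup>2) = (q::real) ^ (c\<^sup>2) * q ^ (2 * c + 1)"
proof -
  have "(Suc c)\<^sup>2 = c\<^sup>2 + (2 * c + 1)" by (simp add: power2_eq_square)
  then show ?thesis by (simp add: power_add)
qed

lemma fa_cong: "c' i = c i \<Longrightarrow> c' (Suc i) = c (Suc i) \<Longrightarrow> fa q c' i = fa q c i"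
  by (simp add: fa_def)

lemma pow_alg:
  assumes "(q::real) > 0"
  shows "(q ^ (2 * (a + d) + 1) * (1 - 1 / q ^ Suc d)) / q ^ (a + d) = q ^ Suc (a + d) - q ^ a"
proof -
  have e: "q ^ (2 * (a + d) + 1) = q ^ a * q ^ a * q ^ d * q ^ d * q"
  proof -
    have "2 * (a + d) + 1 = a + a + d + d + 1" by simp
    then show ?thesis by (simp only: power_add power_one_right)
  qed
  have A: "q ^ a > 0" "q ^ d > 0" using assms by auto
  have e2: "q ^ (a + d) = q ^ a * q ^ d" "q ^ Suc (a + d) = q * q ^ a * q ^ d" "q ^ Suc d = q * q ^ d"
    by (simp_all add: power_add)
  show ?thesis unfolding e e2 using A assms by (simp add: field_simps)
qed

lemma key_identity:
  assumes q: "q > 1" and P: "ispart lam" and A: "addable lam s"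
  shows "step3_prob q lam s * autq q (add_box lam s)
         = (q ^ Suc (col_len lam s) - q ^ col_len lam (Suc s)) * autq q lam"
proof -
  define c where "c = col_len lam"
  define c' where "c' = col_len (add_box lam s)"
  define L where "L = Suc (first_part lam)"
  have s1: "1 \<le> s" using A by (simp add: addable_def)
  have sL: "s \<in> {1..L}" using addable_le_fp[OF A] s1 L_def by simp
  have c't: "c' t = c t + (if t = s then 1 else 0)" if "1 \<le> t" for t
    using add_box_props(3)[OF P A that] c_def c'_def by simp
  have aut1: "autq q lam = (\<Prod>i\<in>{1..L}. fa q c i)" using autq_ext[of lam L] L_def c_def by simp
  have aut2: "autq q (add_box lam s) = (\<Prod>i\<in>{1..L}. fa q c' i)"
    using autq_ext[of "add_box lam s" L] fp_add_box[OF P A] L_def c'_def by simp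
  have mono: "c (Suc s) \<le> c s" unfolding c_def by (rule col_len_mono) simp
  define d where "d = c s - c (Suc s)"
  have csd: "c s = c (Suc s) + d" using mono d_def by simp
  have qpos: "q > 0" using q by simp
  define X where "X = q ^ (2 * c s + 1) * (1 - 1 / q ^ Suc d)"
  have hX: "X / q ^ c s = q ^ Suc (c s) - q ^ c (Suc s)"
    unfolding X_def csd by (rule pow_alg[OF qpos])
  have Fs: "fa q c' s = fa q c s * X"
  proof -
    have "c' s = Suc (c s)" "c' (Suc s) = c (Suc s)" using c't[of s] c't[of "Suc s"] s1 by auto
    then have "c' s - c' (Suc s) = Suc d" using d_def mono by simp
    then show ?thesis unfolding fa_def X_def using \<open>c' s = Suc (c s)\<close>
      by (simp add: qpoch_inv_Suc sq_Suc d_def mult_ac)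
  qed
  show ?thesis
  proof (cases "s = 1")
    case True
    have "(\<Prod>i\<in>{1..L}. fa q c' i) * fa q c s = (\<Prod>i\<in>{1..L}. fa q c i) * fa q c' s"
      by (rule prod_change1) (use sL True in \<open>auto intro!: fa_cong simp: c't\<close>)
    then have e: "autq q (add_box lam s) * fa q c s = autq q lam * fa q c s * X"
      using aut1 aut2 Fs by simp
    have fne: "fa q c s \<noteq> 0" unfolding fa_def using qpoch_inv_nz[OF q] qpos by simp
    have "(autq q (add_box lam s) - autq q lam * X) * fa q c s = 0"
      using e by (simp add: algebra_simps)
    then have e2: "autq q (add_box lam s) = autq q lam * X"
      using fne by simp
    have st: "step3_prob q lam s = 1 / q ^ c s" using True by (simp add: step3_prob_def pw_neg c_def)
    have "step3_prob q lam s * autq q (add_box lam s) = autq q lam * (X / q ^ c s)"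
      unfolding st e2 by (simp add: divide_inverse mult_ac)
    also have "\<dots> = autq q lam * (q ^ Suc (c s) - q ^ c (Suc s))" by (simp only: hX)
    finally show ?thesis by (simp add: c_def mult.commute)
  next
    case False
    then have s2: "2 \<le> s" using s1 by simp
    define e where "e = c (s - 1) - c s"
    have lt: "c s < c (s - 1)" using A False c_def by (simp add: addable_def)
    then have e0: "e > 0" "c (s - 1) = c s + e" using e_def by auto
    obtain e' where e': "e = Suc e'" using e0 by (cases e) auto
    have Fs1: "fa q c (s - 1) = fa q c' (s - 1) * (1 - 1 / q ^ e)"
    proof -
      have "c' (s - 1) = c (s - 1)" "c' s = Suc (c s)" using c't[of "s-1"] c't[of s] s2 by auto
      then have "c' (s - 1) - c' s = e'" "c (s - 1) - c s = Suc e'" using e0 e' by auto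
      then show ?thesis unfolding fa_def using \<open>c' (s - 1) = c (s - 1)\<close> e' s2
        by (simp add: qpoch_inv_Suc mult_ac)
    qed
    have "(\<Prod>i\<in>{1..L}. fa q c' i) * (fa q c s * fa q c (s - 1)) = (\<Prod>i\<in>{1..L}. fa q c i) * (fa q c' s * fa q c' (s - 1))"
      by (rule prod_change2) (use sL s2 in \<open>auto intro!: fa_cong simp: c't\<close>)
    then have eq: "autq q (add_box lam s) * (fa q c s * fa q c' (s - 1) * (1 - 1 / q ^ e)) =
        autq q lam * (fa q c s * fa q c' (s - 1)) * X"
      using aut1 aut2 Fs Fs1 by (simp add: mult_ac)
    have fne: "fa q c s * fa q c' (s - 1) \<noteq> 0" unfolding fa_def using qpoch_inv_nz[OF q] qpos by simp
    have st: "step3_prob q lam s = 1 / q ^ c s - 1 / q ^ c (s - 1)"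
      using False by (simp add: step3_prob_def pw_neg c_def)
    have st2: "step3_prob q lam s = (1 - 1 / q ^ e) / q ^ c s"
    proof -
      have "q ^ c s > 0" "q ^ e > 0" using qpos by auto
      then show ?thesis unfolding st e0(2) power_add by (simp add: diff_divide_distrib divide_divide_eq_left mult.commute)
    qed
    have "step3_prob q lam s * autq q (add_box lam s) * (fa q c s * fa q c' (s - 1))
       = autq q (add_box lam s) * (fa q c s * fa q c' (s - 1) * (1 - 1 / q ^ e)) / q ^ c s"
      unfolding st2 by (simp add: divide_inverse mult_ac)
    also have "\<dots> = autq q lam * (fa q c s * fa q c' (s - 1)) * X / q ^ c s"
      using eq by simp
    also have "\<dots> = (q ^ Suc (c s) - q ^ c (Suc s)) * autq q lam * (fa q c s * fa q c' (s - 1))"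
      using hX by (simp add: divide_inverse mult_ac)
    finally show ?thesis using fne by (simp add: c_def)
  qed
qed

lemma length_le_sum_nz: "0 \<notin> set xs \<Longrightarrow> length xs \<le> sum_list (xs::nat list)"
  by (induction xs) (auto simp: Suc_le_eq)

lemma finite_partitions: "finite (partitions_of m)"
proof -
  have "partitions_of m \<subseteq> {xs. set xs \<subseteq> {0..m} \<and> length xs \<le> m}"
  proof
    fix xs assume "xs \<in> partitions_of m"
    then have "0 \<notin> set xs" "sum_list xs = m" by (auto simp: partitions_of_def)
    then show "xs \<in> {xs. set xs \<subseteq> {0..m} \<and> length xs \<le> m}"
      using length_le_sum_nz[of xs] member_le_sum_list[of _ xs] by auto
  qed
  moreover have "finite {xs. set xs \<subseteq> {0..m} \<and> length xs \<le> (m::nat)}"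
    by (rule finite_lists_length_le) simp
  ultimately show ?thesis by (rule finite_subset)
qed

definition Pp :: "real \<Rightarrow> real \<Rightarrow> nat \<Rightarrow> real" where
  "Pp q x m = (\<Prod>i<m. 1 - x * q ^ i)"

lemma Pp_Suc: "Pp q x (Suc m) = Pp q x m * (1 - x * q ^ m)"
  by (simp add: Pp_def)

definition Psi :: "real \<Rightarrow> real \<Rightarrow> nat list \<Rightarrow> nat \<Rightarrow> real" where
  "Psi q x nu s = Pp q x (col_len nu 1) * (q ^ col_len nu s - q ^ col_len nu (Suc s)) / autq q nu"

lemma pointwise:
  assumes q: "q > 1" and P: "ispart lam" and A: "addable lam s"
  shows "Pp q x (col_len lam 1) / autq q lam * (step3_prob q lam s - (if s = 1 then x else 0))
         = Psi q x (add_box lam s) s"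
proof -
  have s1: "1 \<le> s" using A by (simp add: addable_def)
  have cs: "col_len (add_box lam s) s = Suc (col_len lam s)"
    using add_box_props(3)[OF P A s1] by simp
  have cs1: "col_len (add_box lam s) (Suc s) = col_len lam (Suc s)"
    using add_box_props(3)[OF P A, of "Suc s"] s1 by simp
  have ap: "autq q lam > 0" "autq q (add_box lam s) > 0" using autq_pos[OF q] by auto
  have K: "step3_prob q lam s / autq q lam = (q ^ col_len (add_box lam s) s - q ^ col_len (add_box lam s) (Suc s)) / autq q (add_box lam s)"
    using key_identity[OF q P A] ap unfolding cs cs1 by (simp add: field_simps)
  show ?thesis
  proof (cases "s = 1")
    case True
    have c1: "col_len (add_box lam s) 1 = Suc (col_len lam 1)" using cs True by simp
    have st: "step3_prob q lam s = 1 / q ^ col_len lam 1" using True by (simp add: step3_prob_def pw_neg)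
    have qp: "q ^ col_len lam 1 > 0" using q by simp
    have "step3_prob q lam s - x = step3_prob q lam s * (1 - x * q ^ col_len lam 1)"
      unfolding st using qp q by (simp add: right_diff_distrib)
    then have "Pp q x (col_len lam 1) / autq q lam * (step3_prob q lam s - (if s = 1 then x else 0))
        = Pp q x (col_len (add_box lam s) 1) * (step3_prob q lam s / autq q lam)"
      using True c1 by (simp add: Pp_Suc)
    then show ?thesis unfolding K Psi_def by simp
  next
    case False
    have c1: "col_len (add_box lam s) 1 = col_len lam 1" using add_box_props(3)[OF P A, of 1] False by simp
    have "Pp q x (col_len lam 1) / autq q lam * (step3_prob q lam s - (if s = 1 then x else 0))
        = Pp q x (col_len (add_box lam s) 1) * (step3_prob q lam s / autq q lam)"
      using False c1 by simp
    then show ?thesis unfolding K Psi_def by simp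
  qed
qed

lemma nonaddable_zero:
  assumes "s \<in> {1..Suc (first_part lam)}" "\<not> addable lam s"
  shows "step3_prob q lam s - (if s = 1 then x else 0) = 0"
proof -
  have s2: "s \<noteq> 1" "1 \<le> s" using assms by (auto simp: addable_def)
  have "col_len lam s \<le> col_len lam (s - 1)" by (rule col_len_mono) simp
  then have "col_len lam s = col_len lam (s - 1)" using assms s2 by (auto simp: addable_def)
  then show ?thesis using s2 by (simp add: step3_prob_def)
qed

lemma noncorner_zero:
  assumes "s \<in> {1..first_part nu}" "\<not> corner nu s"
  shows "Psi q x nu s = 0"
proof -
  have "col_len nu (Suc s) \<le> col_len nu s" by (rule col_len_mono) simp
  then have "col_len nu (Suc s) = col_len nu s" using assms by (auto simp: corner_def)
  then show ?thesis by (simp add: Psi_def)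
qed

lemma telescope_Psi:
  assumes "ispart nu" "nu \<noteq> []"
  shows "(\<Sum>s\<in>{1..first_part nu}. Psi q x nu s) = Pp q x (col_len nu 1) * (q ^ col_len nu 1 - 1) / autq q nu"
proof -
  have "(\<Sum>s\<in>{1..first_part nu}. Psi q x nu s)
     = Pp q x (col_len nu 1) / autq q nu * (\<Sum>s\<in>{1..first_part nu}. (q ^ col_len nu s - q ^ col_len nu (Suc s)))"
    unfolding Psi_def sum_distrib_left by (simp add: field_simps)
  also have "(\<Sum>s\<in>{1..first_part nu}. (q ^ col_len nu s - q ^ col_len nu (Suc s))) = q ^ col_len nu 1 - q ^ col_len nu (Suc (first_part nu))"
  proof -
    have "first_part nu \<ge> 1"
    proof -
      obtain a where "a \<in> set nu" using assms(2) by (cases nu) auto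
      then have "a \<ge> 1" using assms(1) by (auto simp: ispart_def intro: Suc_leI gr0I)
      then have "0 < col_len nu 1" using \<open>a \<in> set nu\<close> unfolding col_len_def
        by (auto simp: filter_empty_conv length_greater_0_conv)
      then show ?thesis using col_len_pos_iff[of 1 nu] by simp
    qed
    then show ?thesis using sum_Suc_diff[of 1 "first_part nu" "\<lambda>s. - (q ^ col_len nu s)"] by simp
  qed
  also have "col_len nu (Suc (first_part nu)) = 0" by (rule col_len_zero_beyond) simp
  finally show ?thesis by simp
qed

lemma part_nonempty: "nu \<in> partitions_of (Suc j) \<Longrightarrow> nu \<noteq> []"
  by (auto simp: partitions_of_def)

lemma regroup:
  fixes H :: "nat list \<Rightarrow> real"
  assumes q: "q > 1"
  shows "(\<Sum>lam\<in>partitions_of j. \<Sum>s\<in>{1..Suc (first_part lam)}.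
            Pp q x (col_len lam 1) / autq q lam * (step3_prob q lam s - (if s = 1 then x else 0)) * H (add_box lam s))
       = (\<Sum>nu\<in>partitions_of (Suc j). Pp q x (col_len nu 1) * (q ^ col_len nu 1 - 1) / autq q nu * H nu)"
proof -
  define F where "F = (\<lambda>(lam, s). Pp q x (col_len lam 1) / autq q lam * (step3_prob q lam s - (if s = 1 then x else 0)) * H (add_box lam s))"
  define G where "G = (\<lambda>(nu, s). Psi q x nu s * H nu)"
  define SA where "SA = Sigma (partitions_of j) (\<lambda>lam. {1..Suc (first_part lam)})"
  define AP where "AP = {p \<in> SA. addable (fst p) (snd p)}"
  define SB where "SB = Sigma (partitions_of (Suc j)) (\<lambda>nu. {1..first_part nu})"
  define CP where "CP = {p \<in> SB. corner (fst p) (snd p)}"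
  define h where "h = (\<lambda>(lam::nat list, s::nat). (add_box lam s, s))"
  have fSA: "finite SA" unfolding SA_def using finite_partitions by auto
  have fSB: "finite SB" unfolding SB_def using finite_partitions by auto
  have "(\<Sum>lam\<in>partitions_of j. \<Sum>s\<in>{1..Suc (first_part lam)}. F (lam, s)) = (\<Sum>(lam, s)\<in>SA. F (lam, s))"
    unfolding SA_def by (rule sum.Sigma) (auto simp: finite_partitions)
  also have "\<dots> = sum F SA" by simp
  also have "\<dots> = sum F AP"
  proof (rule sum.mono_neutral_right[OF fSA])
    show "AP \<subseteq> SA" by (auto simp: AP_def)
    show "\<forall>p\<in>SA - AP. F p = 0"
    proof
      fix p assume p: "p \<in> SA - AP"
      obtain lam s where ls: "p = (lam, s)" by (cases p)
      have "s \<in> {1..Suc (first_part lam)}" "\<not> addable lam s" using p ls by (auto simp: AP_def SA_def)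
      from nonaddable_zero[OF this, of q x] show "F p = 0" unfolding ls F_def by simp
    qed
  qed
  also have "\<dots> = (\<Sum>p\<in>AP. G (h p))"
  proof (rule sum.cong)
    fix p assume "p \<in> AP"
    then obtain lam s where p: "p = (lam, s)" "ispart lam" "addable lam s"
      by (cases p) (auto simp: AP_def SA_def partitions_of_iff)
    show "F p = G (h p)" unfolding p F_def G_def h_def prod.case pointwise[OF q p(2,3)] by (rule refl)
  qed simp
  also have "\<dots> = sum G CP"
  proof (rule sum.reindex_bij_betw)
    show "bij_betw h AP CP"
    proof (rule bij_betw_imageI)
      show "inj_on h AP"
      proof (rule inj_onI)
        fix p p' assume pp: "p \<in> AP" "p' \<in> AP" "h p = h p'"
        obtain lam s where p: "p = (lam, s)" "ispart lam" "addable lam s"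
          using pp(1) by (cases p) (auto simp: AP_def SA_def partitions_of_iff)
        obtain lam' s' where p': "p' = (lam', s')" "ispart lam'" "addable lam' s'"
          using pp(2) by (cases p') (auto simp: AP_def SA_def partitions_of_iff)
        have ss: "s' = s" and ab: "add_box lam s = add_box lam' s" using pp(3) p p' by (auto simp: h_def)
        have "lam = lam'"
        proof (rule part_eqI[OF p(2) p'(2)])
          fix t :: nat assume t: "1 \<le> t"
          show "col_len lam t = col_len lam' t"
            using add_box_props(3)[OF p(2,3) t] add_box_props(3)[OF p'(2) p'(3)[unfolded ss] t] ab by simp
        qed
        then show "p = p'" using p p' ss by simp
      qed
      show "h ` AP = CP"
      proof
        show "h ` AP \<subseteq> CP"
        proof
          fix y assume "y \<in> h ` AP"
          then obtain lam s where p: "(lam, s) \<in> AP" "y = (add_box lam s, s)" by (auto simp: h_def)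
          have P: "ispart lam" "addable lam s" "sum_list lam = j"
            using p(1) by (auto simp: AP_def SA_def partitions_of_iff)
          have s1: "1 \<le> s" using P by (simp add: addable_def)
          have cs: "col_len (add_box lam s) s = Suc (col_len lam s)"
            using add_box_props(3)[OF P(1,2) s1] by simp
          have cs1: "col_len (add_box lam s) (Suc s) = col_len lam (Suc s)"
            using add_box_props(3)[OF P(1,2), of "Suc s"] s1 by simp
          have mono: "col_len lam (Suc s) \<le> col_len lam s" by (rule col_len_mono) simp
          have "s \<le> first_part (add_box lam s)" using col_len_pos_iff[OF s1, of "add_box lam s"] cs by simp
          moreover have "corner (add_box lam s) s" using cs cs1 mono s1 by (simp add: corner_def)
          moreover have "add_box lam s \<in> partitions_of (Suc j)"
            using add_box_props(1,2)[OF P(1,2)] P(3) by (simp add: partitions_of_iff)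
          ultimately show "y \<in> CP" using p(2) s1 by (simp add: CP_def SB_def)
        qed
        show "CP \<subseteq> h ` AP"
        proof
          fix y assume "y \<in> CP"
          then obtain nu s where y: "y = (nu, s)" "ispart nu" "corner nu s" "sum_list nu = Suc j"
            by (cases y) (auto simp: CP_def SB_def partitions_of_iff)
          obtain lam where l: "ispart lam" "addable lam s" "add_box lam s = nu" "Suc (sum_list lam) = sum_list nu"
            using remove_box_exists[OF y(2,3)] by blast
          have "(lam, s) \<in> AP" using l y addable_le_fp[OF l(2)]
            by (auto simp: AP_def SA_def partitions_of_iff addable_def)
          then show "y \<in> h ` AP" using l y by (auto simp: h_def image_iff intro!: bexI[of _ "(lam, s)"])
        qed
      qed
    qed
  qed
  also have "\<dots> = sum G SB"
  proof (rule sum.mono_neutral_left[OF fSB])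
    show "CP \<subseteq> SB" by (auto simp: CP_def)
    show "\<forall>p\<in>SB - CP. G p = 0"
    proof
      fix p assume p: "p \<in> SB - CP"
      obtain nu s where ls: "p = (nu, s)" by (cases p)
      have "s \<in> {1..first_part nu}" "\<not> corner nu s" using p ls by (auto simp: CP_def SB_def)
      from noncorner_zero[OF this, of q x] show "G p = 0" unfolding ls G_def by simp
    qed
  qed
  also have "\<dots> = (\<Sum>(nu, s)\<in>SB. G (nu, s))" by simp
  also have "\<dots> = (\<Sum>nu\<in>partitions_of (Suc j). \<Sum>s\<in>{1..first_part nu}. G (nu, s))"
    unfolding SB_def by (rule sum.Sigma[symmetric]) (auto simp: finite_partitions)
  also have "\<dots> = (\<Sum>nu\<in>partitions_of (Suc j). Pp q x (col_len nu 1) * (q ^ col_len nu 1 - 1) / autq q nu * H nu)"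
  proof (rule sum.cong)
    fix nu assume nu: "nu \<in> partitions_of (Suc j)"
    have "(\<Sum>s\<in>{1..first_part nu}. G (nu, s)) = (\<Sum>s\<in>{1..first_part nu}. Psi q x nu s) * H nu"
      unfolding G_def sum_distrib_right by simp
    then show "(\<Sum>s\<in>{1..first_part nu}. G (nu, s)) = Pp q x (col_len nu 1) * (q ^ col_len nu 1 - 1) / autq q nu * H nu"
      using telescope_Psi[of nu q x] nu part_nonempty[OF nu] by (simp add: partitions_of_iff)
  qed simp
  finally show ?thesis unfolding F_def by simp
qed

definition valid :: "nat \<Rightarrow> nat list \<Rightarrow> bool" where
  "valid N lam \<longleftrightarrow> ispart lam \<and> 1 \<le> N \<and> col_len lam 1 \<le> N"

lemma step2_alt:
  assumes q: "q > 1" and N: "1 \<le> N"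
  shows "step2_prob q N lam s = (step3_prob q lam s - (if s = 1 then 1 / q ^ N else 0)) / (1 - 1 / q ^ N)"
proof -
  define Q where "Q = q ^ N"
  have Q1: "Q > 1" unfolding Q_def using q N by (simp add: one_less_power)
  have gen: "(Q * A - Q * B) / (Q - 1) = (A - B) / (1 - 1 / Q)" for A B :: real
  proof -
    have "1 - 1 / Q = (Q - 1) / Q" using Q1 by (simp add: field_simps)
    then show ?thesis using Q1 by (simp add: field_simps)
  qed
  have qn: "q \<noteq> 0" using q by simp
  show ?thesis
  proof (cases "s = 1")
    case True
    have "step2_prob q N lam s = (Q * (1 / q ^ col_len lam 1) - Q * (1 / Q)) / (Q - 1)"
      using True qn Q1 by (simp add: step2_prob_def pw_diff Q_def)
    also have "\<dots> = (1 / q ^ col_len lam 1 - 1 / Q) / (1 - 1 / Q)" by (rule gen)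
    finally show ?thesis using True by (simp add: step3_prob_def pw_neg Q_def)
  next
    case False
    have "step2_prob q N lam s = (Q * (1 / q ^ col_len lam s) - Q * (1 / q ^ col_len lam (s - 1))) / (Q - 1)"
      using False qn by (simp add: step2_prob_def pw_diff Q_def)
    also have "\<dots> = (1 / q ^ col_len lam s - 1 / q ^ col_len lam (s - 1)) / (1 - 1 / Q)" by (rule gen)
    finally show ?thesis using False by (simp add: step3_prob_def pw_neg Q_def)
  qed
qed

lemma inv_pow_mono: "(q::real) > 1 \<Longrightarrow> a \<le> b \<Longrightarrow> 1 / q ^ b \<le> 1 / q ^ a"
  by (simp add: frac_le power_increasing)

lemma step3_nonneg: "q > 1 \<Longrightarrow> 1 \<le> s \<Longrightarrow> step3_prob q lam s \<ge> 0"
proof -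
  assume q: "q > 1" and s: "1 \<le> s"
  have "col_len lam s \<le> col_len lam (s - 1)" by (rule col_len_mono) simp
  then show ?thesis using inv_pow_mono[OF q] q by (auto simp: step3_prob_def pw_neg)
qed

lemma step3_sum_gen: "(\<Sum>s\<in>{1..Suc m}. step3_prob q lam s) = 1 / q ^ col_len lam (Suc m)"
proof (induction m)
  case 0 then show ?case by (simp add: step3_prob_def pw_neg)
next
  case (Suc m)
  have "{1..Suc (Suc m)} = insert (Suc (Suc m)) {1..Suc m}" by auto
  then show ?case using Suc by (simp add: step3_prob_def pw_neg)
qed

lemma step3_sum: "(\<Sum>s\<in>{1..Suc (first_part lam)}. step3_prob q lam s) = 1"
proof -
  have h: "col_len lam (Suc (first_part lam)) = 0" by (rule col_len_zero_beyond) simp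
  have "(\<Sum>s\<in>{1..Suc (first_part lam)}. step3_prob q lam s) = 1 / q ^ col_len lam (Suc (first_part lam))"
    by (rule step3_sum_gen)
  then show ?thesis by (simp only: h power_0 div_by_1)
qed

lemma step2_nonneg:
  assumes q: "q > 1" and v: "valid N lam" and s: "1 \<le> s"
  shows "step2_prob q N lam s \<ge> 0"
proof -
  have N: "1 \<le> N" "col_len lam 1 \<le> N" using v by (auto simp: valid_def)
  have Q: "1 / q ^ N < 1" using q N by (simp add: one_less_power)
  have "step3_prob q lam s - (if s = 1 then 1 / q ^ N else 0) \<ge> 0"
    using step3_nonneg[OF q s] inv_pow_mono[OF q N(2)] by (auto simp: step3_prob_def pw_neg)
  then show ?thesis using Q by (simp add: step2_alt[OF q N(1)])
qed

lemma step2_sum: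
  assumes q: "q > 1" and N: "1 \<le> N"
  shows "(\<Sum>s\<in>{1..Suc (first_part lam)}. step2_prob q N lam s) = 1"
proof -
  have Q: "1 / q ^ N < 1" using q N by (simp add: one_less_power)
  have Qn: "q ^ N \<noteq> 1" using Q by auto
  have "(\<Sum>s\<in>{1..Suc (first_part lam)}. step3_prob q lam s - (if s = 1 then 1 / q ^ N else 0))
        = (\<Sum>s\<in>{1..Suc (first_part lam)}. step3_prob q lam s) - (\<Sum>s\<in>{1..Suc (first_part lam)}. (if s = 1 then 1 / q ^ N else 0))"
    by (rule sum_subtractf)
  also have "\<dots> = 1 - 1 / q ^ N" unfolding step3_sum by simp
  finally show ?thesis using Q Qn unfolding step2_alt[OF q N] sum_divide_distrib[symmetric] by simp
qed

lemma step2_valid: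
  assumes q: "q > 1" and v: "valid N lam" and NN: "N \<le> N'" and s: "1 \<le> s"
    and nz: "step2_prob q N' lam s \<noteq> 0"
  shows "addable lam s" "valid N' (add_box lam s)"
proof -
  have P: "ispart lam" and N: "1 \<le> N" "col_len lam 1 \<le> N" using v by (auto simp: valid_def)
  have N': "1 \<le> N'" using N NN by simp
  show A: "addable lam s"
  proof (rule ccontr)
    assume "\<not> addable lam s"
    then have "s \<noteq> 1" using s by (auto simp: addable_def)
    have "col_len lam s \<le> col_len lam (s - 1)" by (rule col_len_mono) simp
    then have "col_len lam s = col_len lam (s - 1)" using \<open>\<not> addable lam s\<close> s by (auto simp: addable_def)
    then have "step2_prob q N' lam s = 0" using \<open>s \<noteq> 1\<close> by (simp add: step2_prob_def)
    then show False using nz by simp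
  qed
  have cl: "col_len (add_box lam s) 1 \<le> N'"
  proof (cases "s = 1")
    case True
    have "col_len lam 1 \<noteq> N'"
    proof
      assume "col_len lam 1 = N'"
      then have "step2_prob q N' lam s = 0" using True by (simp add: step2_prob_def)
      then show False using nz by simp
    qed
    then show ?thesis using add_box_props(3)[OF P A, of 1] True N NN by simp
  next
    case False
    then show ?thesis using add_box_props(3)[OF P A, of 1] N NN by simp
  qed
  show "valid N' (add_box lam s)" using add_box_props(1)[OF P A] cl N' by (simp add: valid_def)
qed

definition Xs :: "real \<Rightarrow> nat \<Rightarrow> nat \<Rightarrow> nat list \<Rightarrow> nat list \<Rightarrow> real" where
  "Xs q r N lam mu = (\<Sum>s\<in>{1..Suc (first_part lam)}. step2_prob q N lam s * proc_prob q r N (add_box lam s) mu)"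

lemma proc_Suc: "proc_prob q (Suc r) N lam mu = (\<Sum>k. (1 / q ^ Suc r) ^ k * (1 - 1 / q ^ Suc r) * Xs q r (N + k) lam mu)"
  unfolding Xs_def by (simp only: proc_prob.simps pw_neg)

lemma Xs_bound:
  assumes q: "q > 1" and v: "valid N lam"
    and G: "\<And>N' lam'. valid N' lam' \<Longrightarrow> 0 \<le> proc_prob q r N' lam' mu \<and> proc_prob q r N' lam' mu \<le> 1"
  shows "0 \<le> Xs q r N lam mu \<and> Xs q r N lam mu \<le> 1"
proof -
  have N: "1 \<le> N" using v by (simp add: valid_def)
  have t: "0 \<le> step2_prob q N lam s * proc_prob q r N (add_box lam s) mu \<and>
        step2_prob q N lam s * proc_prob q r N (add_box lam s) mu \<le> step2_prob q N lam s"
    if s: "s \<in> {1..Suc (first_part lam)}" for s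
  proof (cases "step2_prob q N lam s = 0")
    case True then show ?thesis by simp
  next
    case False
    have "valid N (add_box lam s)" using step2_valid[OF q v order.refl _ False] s by simp
    then have "0 \<le> proc_prob q r N (add_box lam s) mu \<and> proc_prob q r N (add_box lam s) mu \<le> 1" by (rule G)
    moreover have "step2_prob q N lam s \<ge> 0" using step2_nonneg[OF q v] s by simp
    ultimately show ?thesis by (simp add: mult_left_le)
  qed
  have "Xs q r N lam mu \<le> (\<Sum>s\<in>{1..Suc (first_part lam)}. step2_prob q N lam s)"
    unfolding Xs_def by (rule sum_mono) (use t in blast)
  also have "\<dots> = 1" by (rule step2_sum[OF q N])
  finally have le: "Xs q r N lam mu \<le> 1" .
  have "0 \<le> Xs q r N lam mu" unfolding Xs_def by (rule sum_nonneg) (use t in blast)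
  then show ?thesis using le by simp
qed

lemma geom_sums:
  assumes "0 \<le> t" "t < (1::real)"
  shows "(\<lambda>k. t ^ k * (1 - t)) sums 1"
proof -
  have "(\<lambda>k. t ^ k) sums (1 / (1 - t))" using assms by (intro geometric_sums) simp
  from sums_mult2[OF this, of "1 - t"] show ?thesis using assms by simp
qed

lemma t_bounds: "(q::real) > 1 \<Longrightarrow> 0 \<le> 1 / q ^ Suc r \<and> 1 / q ^ Suc r < 1"
  by (simp add: one_less_power del: power_Suc)

lemma proc_bound:
  assumes q: "q > 1"
  shows "valid N lam \<Longrightarrow> 0 \<le> proc_prob q r N lam mu \<and> proc_prob q r N lam mu \<le> 1"
proof (induction r arbitrary: N lam)
  case 0
  have t: "0 \<le> step3_prob q lam s * (if add_box lam s = mu then 1 else 0) \<and>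
           step3_prob q lam s * (if add_box lam s = mu then 1 else 0) \<le> step3_prob q lam s"
    if "s \<in> {1..Suc (first_part lam)}" for s
    using step3_nonneg[OF q, of s lam] that by auto
  have "proc_prob q 0 N lam mu \<le> (\<Sum>s\<in>{1..Suc (first_part lam)}. step3_prob q lam s)"
    unfolding proc_prob.simps by (rule sum_mono) (use t in blast)
  moreover have "0 \<le> proc_prob q 0 N lam mu"
    unfolding proc_prob.simps by (rule sum_nonneg) (use t in blast)
  ultimately show ?case using step3_sum[of q lam] by simp
next
  case (Suc r)
  define t where "t = 1 / q ^ Suc r"
  have tb: "0 \<le> t" "t < 1" using t_bounds[OF q] t_def by auto
  have vk: "valid (N + k) lam" for k using Suc.prems by (auto simp: valid_def)
  have Xb: "0 \<le> Xs q r (N + k) lam mu \<and> Xs q r (N + k) lam mu \<le> 1" for k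
    using Xs_bound[OF q vk Suc.IH] .
  have tm: "0 \<le> t ^ k * (1 - t) * Xs q r (N + k) lam mu \<and> t ^ k * (1 - t) * Xs q r (N + k) lam mu \<le> t ^ k * (1 - t)" for k
    using Xb[of k] tb by (auto intro!: mult_nonneg_nonneg mult_left_le)
  have gs: "(\<lambda>k. t ^ k * (1 - t)) sums 1" using geom_sums tb by blast
  have sm: "summable (\<lambda>k. t ^ k * (1 - t) * Xs q r (N + k) lam mu)"
    by (rule summable_comparison_test'[where g="\<lambda>k. t ^ k * (1 - t)"]) (use tm gs sums_summable in auto)
  have "(\<Sum>k. t ^ k * (1 - t) * Xs q r (N + k) lam mu) \<le> (\<Sum>k. t ^ k * (1 - t))"
    by (rule suminf_le) (use tm sm gs sums_summable in auto)
  also have "\<dots> = 1" using gs sums_unique by metis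
  finally show ?case unfolding proc_Suc t_def[symmetric] using tm sm by (auto intro!: suminf_nonneg)
qed

lemma proc_summable:
  assumes q: "q > 1" and v: "valid N lam"
  shows "summable (\<lambda>k. (1 / q ^ Suc r) ^ k * (1 - 1 / q ^ Suc r) * Xs q r (N + k) lam mu)"
proof -
  define t where "t = 1 / q ^ Suc r"
  have tb: "0 \<le> t" "t < 1" using t_bounds[OF q] t_def by auto
  have vk: "valid (N + k) lam" for k using v by (auto simp: valid_def)
  have Xb: "0 \<le> Xs q r (N + k) lam mu \<and> Xs q r (N + k) lam mu \<le> 1" for k
    using Xs_bound[OF q vk proc_bound[OF q]] .
  have tm: "0 \<le> t ^ k * (1 - t) * Xs q r (N + k) lam mu \<and> t ^ k * (1 - t) * Xs q r (N + k) lam mu \<le> t ^ k * (1 - t)" for k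
    using Xb[of k] tb by (auto intro!: mult_nonneg_nonneg mult_left_le)
  have gs: "(\<lambda>k. t ^ k * (1 - t)) sums 1" using geom_sums tb by blast
  show ?thesis unfolding t_def[symmetric]
    by (rule summable_comparison_test'[where g="\<lambda>k. t ^ k * (1 - t)"]) (use tm gs sums_summable in auto)
qed

lemma proc_sum_one:
  assumes q: "q > 1"
  shows "valid N lam \<Longrightarrow> (\<Sum>mu\<in>partitions_of (sum_list lam + r + 1). proc_prob q r N lam mu) = 1"
proof (induction r arbitrary: N lam)
  case 0
  have P: "ispart lam" using 0 by (simp add: valid_def)
  have "(\<Sum>mu\<in>partitions_of (sum_list lam + 0 + 1). proc_prob q 0 N lam mu)
      = (\<Sum>s\<in>{1..Suc (first_part lam)}. step3_prob q lam s * (\<Sum>mu\<in>partitions_of (sum_list lam + 1). (if add_box lam s = mu then 1 else 0)))"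
    by (simp add: sum.swap[of _ "partitions_of _"] sum_distrib_left)
  also have "\<dots> = (\<Sum>s\<in>{1..Suc (first_part lam)}. step3_prob q lam s)"
  proof (rule sum.cong)
    fix s assume s: "s \<in> {1..Suc (first_part lam)}"
    show "step3_prob q lam s * (\<Sum>mu\<in>partitions_of (sum_list lam + 1). (if add_box lam s = mu then 1 else 0)) = step3_prob q lam s"
    proof (cases "addable lam s")
      case True
      have "add_box lam s \<in> partitions_of (sum_list lam + 1)"
        using add_box_props(1,2)[OF P True] by (simp add: partitions_of_iff)
      then show ?thesis using finite_partitions by simp
    next
      case False
      then show ?thesis using nonaddable_zero[OF s False, of q 0] by simp
    qed
  qed simp
  also have "\<dots> = 1" by (rule step3_sum)
  finally show ?case .
next
  case (Suc r)
  define t where "t = 1 / q ^ Suc r"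
  have tb: "0 \<le> t" "t < 1" using t_bounds[OF q] t_def by auto
  have N: "1 \<le> N" using Suc.prems by (simp add: valid_def)
  have gs: "(\<lambda>k. t ^ k * (1 - t)) sums 1" using geom_sums tb by blast
  define PP where "PP = partitions_of (sum_list lam + Suc r + 1)"
  have "(\<Sum>mu\<in>PP. proc_prob q (Suc r) N lam mu) = (\<Sum>mu\<in>PP. \<Sum>k. t ^ k * (1 - t) * Xs q r (N + k) lam mu)"
    unfolding proc_Suc t_def ..
  also have "\<dots> = (\<Sum>k. \<Sum>mu\<in>PP. t ^ k * (1 - t) * Xs q r (N + k) lam mu)"
    by (rule suminf_sum[symmetric]) (use proc_summable[OF q Suc.prems] t_def in auto)
  also have "\<dots> = (\<Sum>k. t ^ k * (1 - t))"
  proof (rule suminf_cong)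
    fix k
    have "(\<Sum>mu\<in>PP. Xs q r (N + k) lam mu) = (\<Sum>s\<in>{1..Suc (first_part lam)}. step2_prob q (N + k) lam s)"
      unfolding Xs_def
    proof (subst sum.swap, rule sum.cong)
      fix s assume s: "s \<in> {1..Suc (first_part lam)}"
      show "(\<Sum>mu\<in>PP. step2_prob q (N + k) lam s * proc_prob q r (N + k) (add_box lam s) mu) = step2_prob q (N + k) lam s"
      proof (cases "step2_prob q (N + k) lam s = 0")
        case True then show ?thesis by simp
      next
        case False
        have A: "addable lam s" and v: "valid (N + k) (add_box lam s)"
          using step2_valid[OF q Suc.prems _ _ False] s by auto
        have "sum_list (add_box lam s) + r + 1 = sum_list lam + Suc r + 1"
          using add_box_props(2)[OF _ A] Suc.prems by (simp add: valid_def)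
        then have "(\<Sum>mu\<in>PP. proc_prob q r (N + k) (add_box lam s) mu) = 1"
          using Suc.IH[OF v] unfolding PP_def by simp
        then show ?thesis by (simp add: sum_distrib_left[symmetric])
      qed
    qed simp
    then show "(\<Sum>mu\<in>PP. t ^ k * (1 - t) * Xs q r (N + k) lam mu) = t ^ k * (1 - t)"
      using step2_sum[OF q, of "N + k" lam] N by (simp add: sum_distrib_left[symmetric])
  qed
  also have "\<dots> = 1" using gs sums_unique by metis
  finally show ?case unfolding PP_def .
qed

lemma double_reindex:
  fixes f :: "nat \<Rightarrow> nat \<Rightarrow> real"
  assumes nn: "\<And>M k. f M k \<ge> 0" and sm: "\<And>M. summable (f M)" and so: "summable (\<lambda>M. \<Sum>k. f M k)"
  shows "summable (\<lambda>M'. \<Sum>M\<le>M'. f M (M' - M))" "(\<Sum>M. \<Sum>k. f M k) = (\<Sum>M'. \<Sum>M\<le>M'. f M (M' - M))"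
proof -
  have hs: "(f M has_sum (\<Sum>k. f M k)) UNIV" for M
    by (rule sums_nonneg_imp_has_sum) (use sm nn in \<open>auto simp: summable_sums\<close>)
  have inf1: "infsum (f M) UNIV = (\<Sum>k. f M k)" for M using hs by (rule infsumI)
  have nn2: "(\<Sum>k. f M k) \<ge> 0" for M using sm nn by (simp add: suminf_nonneg)
  have hs2: "((\<lambda>M. \<Sum>k. f M k) has_sum (\<Sum>M. \<Sum>k. f M k)) UNIV"
    by (rule sums_nonneg_imp_has_sum) (use so nn2 in \<open>auto simp: summable_sums\<close>)
  have gs: "(\<lambda>(M, k). f M k) summable_on (Sigma UNIV (\<lambda>_. UNIV))"
  proof (rule abs_summable_summable)
    have "(\<lambda>p. norm (case p of (M, k) \<Rightarrow> f M k)) = (\<lambda>(M, k). f M k)"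
      using nn by (auto simp: fun_eq_iff)
    moreover have "(\<lambda>z. norm ((\<lambda>(M, k). f M k) z)) summable_on Sigma UNIV (\<lambda>_. UNIV)"
    proof (rule iffD2[OF Infinite_Sum.abs_summable_on_Sigma_iff], rule conjI)
      show "\<forall>x\<in>UNIV. (\<lambda>y. norm ((\<lambda>(M, k). f M k) (x, y))) summable_on UNIV"
        using hs nn by (auto simp: summable_on_def)
    next
      have "(\<lambda>x. norm (\<Sum>\<^sub>\<infinity>y. norm ((\<lambda>(M, k). f M k) (x, y)))) = (\<lambda>x. \<Sum>k. f x k)"
        using inf1 nn nn2 by (auto simp: fun_eq_iff)
      then show "(\<lambda>x. norm (\<Sum>\<^sub>\<infinity>y. norm ((\<lambda>(M, k). f M k) (x, y)))) summable_on UNIV"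
        using hs2 by (auto simp: summable_on_def)
    qed
    ultimately show "(\<lambda>z. norm ((\<lambda>(M, k). f M k) z)) summable_on Sigma UNIV (\<lambda>_. UNIV)" by simp
  qed
  have e1: "infsum (\<lambda>(M, k). f M k) (Sigma UNIV (\<lambda>_. UNIV)) = (\<Sum>M. \<Sum>k. f M k)"
  proof -
    have "infsum (\<lambda>(M, k). f M k) (Sigma UNIV (\<lambda>_. UNIV)) = infsum (\<lambda>M. infsum (f M) UNIV) UNIV"
      using infsum_Sigma'_banach[OF gs] by simp
    also have "\<dots> = (\<Sum>M. \<Sum>k. f M k)" using inf1 hs2 infsumI by simp
    finally show ?thesis .
  qed
  define T where "T = Sigma UNIV (\<lambda>M'::nat. {..M'})"
  define h where "h = (\<lambda>(M::nat, k::nat). (M + k, M))"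
  define g' where "g' = (\<lambda>(M'::nat, M::nat). f M (M' - M))"
  have bij: "bij_betw h (Sigma UNIV (\<lambda>_. UNIV)) T"
  proof (rule bij_betw_byWitness[where f'="\<lambda>(M', M). (M, M' - M)"])
  qed (auto simp: h_def T_def)
  have gh: "(\<lambda>x. g' (h x)) = (\<lambda>(M, k). f M k)" by (auto simp: fun_eq_iff h_def g'_def)
  have gs': "g' summable_on T"
    using summable_on_reindex_bij_betw[OF bij, of g'] gs gh by simp
  have gs'': "(\<lambda>(x, y). g' (x, y)) summable_on Sigma UNIV (\<lambda>M'::nat. {..M'})"
    using gs' unfolding T_def by simp
  have e2: "infsum g' T = infsum (\<lambda>(M, k). f M k) (Sigma UNIV (\<lambda>_. UNIV))"
    using infsum_reindex_bij_betw[OF bij, of g'] gh by simp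
  have e3: "infsum g' T = infsum (\<lambda>M'. infsum (\<lambda>M. g' (M', M)) {..M'}) UNIV"
    using infsum_Sigma'_banach[OF gs''] unfolding T_def by simp
  have so3: "(\<lambda>M'. infsum (\<lambda>M. g' (M', M)) {..M'}) summable_on UNIV"
    using summable_on_Sigma_banach[OF gs''] by simp
  have fin: "(\<lambda>M'. infsum (\<lambda>M. g' (M', M)) {..M'}) = (\<lambda>M'. \<Sum>M\<le>M'. f M (M' - M))"
    by (auto simp: fun_eq_iff g'_def)
  have so4: "(\<lambda>M'. \<Sum>M\<le>M'. f M (M' - M)) summable_on UNIV" using so3 fin by simp
  then show "summable (\<lambda>M'. \<Sum>M\<le>M'. f M (M' - M))" by (rule summable_on_imp_summable)
  have "((\<lambda>M'. \<Sum>M\<le>M'. f M (M' - M)) has_sum infsum (\<lambda>M'. \<Sum>M\<le>M'. f M (M' - M)) UNIV) UNIV"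
    using so4 by simp
  then have "(\<lambda>M'. \<Sum>M\<le>M'. f M (M' - M)) sums infsum (\<lambda>M'. \<Sum>M\<le>M'. f M (M' - M)) UNIV"
    by (rule has_sum_imp_sums)
  then have "(\<Sum>M'. \<Sum>M\<le>M'. f M (M' - M)) = infsum (\<lambda>M'. \<Sum>M\<le>M'. f M (M' - M)) UNIV"
    by (simp add: sums_iff)
  also have "\<dots> = infsum g' T" using e3 fin by simp
  also have "\<dots> = (\<Sum>M. \<Sum>k. f M k)" using e2 e1 by simp
  finally show "(\<Sum>M. \<Sum>k. f M k) = (\<Sum>M'. \<Sum>M\<le>M'. f M (M' - M))" by simp
qed


lemma Pp_shift: "Pp q (q * x) m * (1 - x) = Pp q x m * (1 - x * q ^ m)"
proof (induction m)
  case 0 then show ?case by (simp add: Pp_def)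
next
  case (Suc m)
  have "Pp q (q * x) (Suc m) * (1 - x) = (Pp q (q * x) m * (1 - x)) * (1 - q * x * q ^ m)"
    by (simp add: Pp_Suc mult_ac)
  also have "\<dots> = Pp q x m * (1 - x * q ^ m) * (1 - x * q ^ Suc m)" using Suc by (simp add: mult_ac)
  also have "\<dots> = Pp q x (Suc m) * (1 - x * q ^ Suc m)" by (simp add: Pp_Suc)
  finally show ?case .
qed

lemma Pp_diff:
  assumes "x \<noteq> 0" "x \<noteq> 1"
  shows "Pp q x c * (q ^ c - 1) / (1 - x) = (Pp q x c - Pp q (q * x) c) / x"
proof -
  have nz: "1 - x \<noteq> 0" using assms by simp
  have e: "Pp q (q * x) c = Pp q x c * (1 - x * q ^ c) / (1 - x)"
    using Pp_shift[of q x c] nz by (simp add: field_simps)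
  show ?thesis unfolding e using assms nz by (simp add: field_simps)
qed

definition Dm :: "real \<Rightarrow> nat \<Rightarrow> nat list \<Rightarrow> real" where
  "Dm q M lam = Pp q (1 / q ^ Suc M) (col_len lam 1) - Pp q (1 / q ^ M) (col_len lam 1)"

lemma Dm_eq:
  assumes q: "q > 1"
  shows "Pp q (1 / q ^ Suc M) c * (q ^ c - 1) / (1 - 1 / q ^ Suc M)
       = q ^ Suc M * (Pp q (1 / q ^ Suc M) c - Pp q (1 / q ^ M) c)"
proof -
  have "q ^ Suc M > 1" using q by (rule one_less_power) simp
  then have x1: "1 / q ^ Suc M \<noteq> 0" "1 / q ^ Suc M \<noteq> 1" by auto
  have qx: "q * (1 / q ^ Suc M) = 1 / q ^ M" using q by simp
  show ?thesis using Pp_diff[OF x1, of q c] unfolding qx by simp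
qed

lemma Pp_zero: "i < m \<Longrightarrow> x * q ^ i = 1 \<Longrightarrow> Pp q x m = 0"
  unfolding Pp_def by (rule prod_zero) auto

lemma Pp_inv_zero: "(q::real) > 1 \<Longrightarrow> M < c \<Longrightarrow> Pp q (1 / q ^ M) c = 0"
  by (rule Pp_zero[of M]) auto

lemma Pp_inv_nonneg:
  assumes q: "(q::real) > 1"
  shows "Pp q (1 / q ^ M) c \<ge> 0"
proof (cases "c \<le> M")
  case True
  have "0 \<le> 1 - 1 / q ^ M * q ^ i" if "i < c" for i
  proof -
    have "q ^ i \<le> q ^ M" using that True q by (intro power_increasing) auto
    then show ?thesis using q by (simp add: field_simps)
  qed
  then show ?thesis unfolding Pp_def by (intro prod_nonneg) auto
next
  case False
  then show ?thesis using Pp_inv_zero[OF q, of M c] by simp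
qed

lemma Dm_nonneg:
  assumes q: "(q::real) > 1"
  shows "Dm q M lam \<ge> 0"
proof (cases "col_len lam 1 \<le> M")
  case True
  have "Pp q (1 / q ^ M) (col_len lam 1) \<le> Pp q (1 / q ^ Suc M) (col_len lam 1)"
    unfolding Pp_def
  proof (rule prod_mono)
    fix i assume "i \<in> {..<col_len lam 1}"
    then have "q ^ i \<le> q ^ M" using True q by (intro power_increasing) auto
    moreover have "1 / q ^ Suc M * q ^ i \<le> 1 / q ^ M * q ^ i" using q
      by (intro mult_right_mono) (auto simp: frac_le simp del: power_Suc)
    ultimately show "0 \<le> 1 - 1 / q ^ M * q ^ i \<and> 1 - 1 / q ^ M * q ^ i \<le> 1 - 1 / q ^ Suc M * q ^ i"
      using q by (simp add: field_simps)
  qed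
  then show ?thesis by (simp add: Dm_def)
next
  case False
  then show ?thesis using Pp_inv_zero[OF q, of M "col_len lam 1"] Pp_inv_nonneg[OF q, of "Suc M" "col_len lam 1"]
    by (simp add: Dm_def)
qed

lemma Dm_valid:
  assumes q: "(q::real) > 1" and "Dm q M lam \<noteq> 0"
  shows "col_len lam 1 \<le> Suc M"
proof (rule ccontr)
  assume a: "\<not> ?thesis"
  have "Pp q (1 / q ^ Suc M) (col_len lam 1) = 0" by (rule Pp_inv_zero[OF q]) (use a in simp)
  moreover have "Pp q (1 / q ^ M) (col_len lam 1) = 0" by (rule Pp_inv_zero[OF q]) (use a in simp)
  ultimately show False using assms by (simp add: Dm_def)
qed

lemma Pp_one_zero: "1 \<le> c \<Longrightarrow> Pp q 1 c = 0"
  by (rule Pp_zero[of 0]) auto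

lemma Pp_lim:
  assumes q: "(q::real) > 1"
  shows "(\<lambda>M. Pp q (1 / q ^ M) c) \<longlonglongrightarrow> 1"
proof -
  have z: "(\<lambda>M. 1 / q ^ M) \<longlonglongrightarrow> 0"
  proof -
    have "(\<lambda>M. (1 / q) ^ M) \<longlonglongrightarrow> 0" using q by (intro LIMSEQ_power_zero) auto
    then show ?thesis by (simp add: power_one_over)
  qed
  have "(\<lambda>M. \<Prod>i<c. 1 - 1 / q ^ M * q ^ i) \<longlonglongrightarrow> (\<Prod>i<c. 1 - 0 * q ^ i)"
    by (intro tendsto_prod tendsto_diff tendsto_const tendsto_mult z)
  then show ?thesis by (simp add: Pp_def)
qed

lemma Dm_sums:
  assumes q: "(q::real) > 1" and c: "1 \<le> col_len lam 1"
  shows "(\<lambda>M. Dm q M lam) sums 1"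
proof -
  have "(\<lambda>M. Pp q (1 / q ^ Suc M) (col_len lam 1) - Pp q (1 / q ^ M) (col_len lam 1)) sums (1 - Pp q (1 / q ^ 0) (col_len lam 1))"
    by (rule telescope_sums[OF Pp_lim[OF q]])
  then show ?thesis using Pp_one_zero[OF c] by (simp add: Dm_def)
qed

lemma Dm_partial:
  assumes c: "1 \<le> col_len lam 1"
  shows "(\<Sum>M\<le>M'. Dm q M lam) = Pp q (1 / q ^ Suc M') (col_len lam 1)"
proof -
  have "(\<Sum>M\<le>M'. Dm q M lam) = (\<Sum>M<Suc M'. Dm q M lam)" by (simp add: lessThan_Suc_atMost)
  also have "\<dots> = Pp q (1 / q ^ Suc M') (col_len lam 1) - Pp q (1 / q ^ 0) (col_len lam 1)"
    unfolding Dm_def by (rule sum_lessThan_telescope)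
  finally show ?thesis using Pp_one_zero[OF c] by simp
qed

lemma part_c1_pos: "lam \<in> partitions_of (Suc j) \<Longrightarrow> 1 \<le> col_len lam 1"
proof -
  assume a: "lam \<in> partitions_of (Suc j)"
  then have "lam \<noteq> []" "0 \<notin> set lam" by (auto simp: partitions_of_def)
  then show ?thesis using col_len_one[of lam] by (cases lam) auto
qed

lemma valid_mono: "valid N lam \<Longrightarrow> N \<le> N' \<Longrightarrow> valid N' lam"
  by (auto simp: valid_def)

lemma chain_step:
  assumes q: "q > 1" and j: "1 \<le> j" and K: "K \<ge> 0"
  shows "(\<Sum>M. \<Sum>lam\<in>partitions_of j. K * (1 / q ^ Suc r) ^ M * Dm q M lam / autq q lam * proc_prob q (Suc r) (Suc M) lam mu)
       = (\<Sum>M. \<Sum>nu\<in>partitions_of (Suc j). (K * (1 - 1 / q ^ Suc r) * q) * (1 / q ^ r) ^ M * Dm q M nu / autq q nu * proc_prob q r (Suc M) nu mu)"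
proof -
  define t where "t = 1 / q ^ Suc r"
  define PJ where "PJ = partitions_of j"
  define a where "a = (\<lambda>M lam. K * t ^ M * Dm q M lam / autq q lam)"
  define X where "X = (\<lambda>N lam. Xs q r N lam mu)"
  define f where "f = (\<lambda>M k. \<Sum>lam\<in>PJ. a M lam * (t ^ k * (1 - t) * X (Suc M + k) lam))"
  have tb: "0 \<le> t" "t < 1" using t_bounds[OF q] t_def by auto
  have finPJ: "finite PJ" unfolding PJ_def by (rule finite_partitions)
  obtain j' where j': "j = Suc j'" using j by (cases j) auto
  have cpos: "1 \<le> col_len lam 1" if "lam \<in> PJ" for lam
    using part_c1_pos[of lam j'] that j' PJ_def by simp
  have Ap: "autq q lam > 0" for lam using autq_pos[OF q] .
  have a_nn: "a M lam \<ge> 0" for M lam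
    unfolding a_def using K tb Dm_nonneg[OF q, of M lam] Ap[of lam] by simp
  have a_valid: "valid (Suc M) lam" if "lam \<in> PJ" "a M lam \<noteq> 0" for M lam
  proof -
    have "Dm q M lam \<noteq> 0" using that(2) by (auto simp: a_def)
    then have "col_len lam 1 \<le> Suc M" by (rule Dm_valid[OF q])
    then show ?thesis using that(1) by (simp add: valid_def PJ_def partitions_of_iff)
  qed
  have Xb: "0 \<le> X N lam \<and> X N lam \<le> 1" if "valid N lam" for N lam
    unfolding X_def by (rule Xs_bound[OF q that proc_bound[OF q]])
  have term_nn: "0 \<le> a M lam * (t ^ k * (1 - t) * X (Suc M + k) lam)" if "lam \<in> PJ" for M k lam
  proof (cases "a M lam = 0")
    case False
    have "valid (Suc M + k) lam" using valid_mono[OF a_valid[OF that False]] by simp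
    then show ?thesis using Xb a_nn tb by (auto intro!: mult_nonneg_nonneg)
  qed simp
  have f_nn: "f M k \<ge> 0" for M k unfolding f_def by (rule sum_nonneg) (use term_nn in blast)
  have ser: "(\<lambda>k. a M lam * (t ^ k * (1 - t) * X (Suc M + k) lam)) sums (a M lam * proc_prob q (Suc r) (Suc M) lam mu)"
    if "lam \<in> PJ" for M lam
  proof (cases "a M lam = 0")
    case True then show ?thesis by simp
  next
    case False
    have v: "valid (Suc M) lam" by (rule a_valid[OF that False])
    have "(\<lambda>k. t ^ k * (1 - t) * X (Suc M + k) lam) sums proc_prob q (Suc r) (Suc M) lam mu"
      using proc_summable[OF q v, of r mu] unfolding proc_Suc X_def t_def by (simp add: summable_sums)
    then show ?thesis by (rule sums_mult)
  qed
  have f_sums: "(f M) sums (\<Sum>lam\<in>PJ. a M lam * proc_prob q (Suc r) (Suc M) lam mu)" for M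
    unfolding f_def by (rule sums_sum) (use ser in blast)
  have f_sm: "summable (f M)" for M using f_sums sums_summable by blast
  have LHS: "(\<Sum>M. \<Sum>lam\<in>PJ. K * t ^ M * Dm q M lam / autq q lam * proc_prob q (Suc r) (Suc M) lam mu) = (\<Sum>M. \<Sum>k. f M k)"
  proof (rule suminf_cong)
    fix M
    show "(\<Sum>lam\<in>PJ. K * t ^ M * Dm q M lam / autq q lam * proc_prob q (Suc r) (Suc M) lam mu) = (\<Sum>k. f M k)"
      using sums_unique[OF f_sums[of M]] unfolding a_def .
  qed
  have f_so: "summable (\<lambda>M. \<Sum>k. f M k)"
  proof (rule summable_comparison_test'[where g="\<lambda>M. \<Sum>lam\<in>PJ. K * Dm q M lam / autq q lam"])
    show "summable (\<lambda>M. \<Sum>lam\<in>PJ. K * Dm q M lam / autq q lam)"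
    proof (rule summable_sum)
      fix lam assume "lam \<in> PJ"
      then have "summable (\<lambda>M. Dm q M lam)" using Dm_sums[OF q cpos] sums_summable by blast
      then show "summable (\<lambda>M. K * Dm q M lam / autq q lam)" by (intro summable_divide summable_mult)
    qed
    fix M :: nat
    have eq: "(\<Sum>k. f M k) = (\<Sum>lam\<in>PJ. a M lam * proc_prob q (Suc r) (Suc M) lam mu)"
      using f_sums sums_unique by metis
    have bnd: "0 \<le> a M lam * proc_prob q (Suc r) (Suc M) lam mu \<and>
                   a M lam * proc_prob q (Suc r) (Suc M) lam mu \<le> K * Dm q M lam / autq q lam"
      if "lam \<in> PJ" for lam
    proof (cases "a M lam = 0")
      case True then show ?thesis using K Dm_nonneg[OF q, of M lam] Ap[of lam] by simp
    next
      case False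
      have pb: "0 \<le> proc_prob q (Suc r) (Suc M) lam mu \<and> proc_prob q (Suc r) (Suc M) lam mu \<le> 1"
        by (rule proc_bound[OF q a_valid[OF that False]])
      have "a M lam \<le> K * Dm q M lam / autq q lam"
      proof -
        have "t ^ M \<le> 1" using tb by (simp add: power_le_one)
        then have "K * t ^ M * Dm q M lam \<le> K * Dm q M lam"
          using K Dm_nonneg[OF q, of M lam] tb
          by (metis mult.right_neutral mult_left_mono mult_right_mono mult_nonneg_nonneg)
        then show ?thesis unfolding a_def using Ap[of lam] by (simp add: divide_right_mono)
      qed
      then show ?thesis using pb a_nn[of M lam] by (auto intro: mult_nonneg_nonneg order_trans[OF mult_left_le])
    qed
    have S0: "0 \<le> (\<Sum>lam\<in>PJ. a M lam * proc_prob q (Suc r) (Suc M) lam mu)"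
      by (rule sum_nonneg) (use bnd in blast)
    have S1: "(\<Sum>lam\<in>PJ. a M lam * proc_prob q (Suc r) (Suc M) lam mu) \<le> (\<Sum>lam\<in>PJ. K * Dm q M lam / autq q lam)"
      by (rule sum_mono) (use bnd in blast)
    have "norm (\<Sum>k. f M k) = norm (\<Sum>lam\<in>PJ. a M lam * proc_prob q (Suc r) (Suc M) lam mu)"
      by (simp only: eq)
    also have "\<dots> = (\<Sum>lam\<in>PJ. a M lam * proc_prob q (Suc r) (Suc M) lam mu)"
      using S0 by (simp only: real_norm_def abs_of_nonneg)
    also have "\<dots> \<le> (\<Sum>lam\<in>PJ. K * Dm q M lam / autq q lam)" by (rule S1)
    finally show "norm (\<Sum>k. f M k) \<le> (\<Sum>lam\<in>PJ. K * Dm q M lam / autq q lam)" .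
  qed
  have DR: "(\<Sum>M. \<Sum>k. f M k) = (\<Sum>M'. \<Sum>M\<le>M'. f M (M' - M))"
    by (rule double_reindex(2)[OF f_nn f_sm f_so])
  have inner: "(\<Sum>M\<le>M'. f M (M' - M)) = (\<Sum>nu\<in>partitions_of (Suc j). (K * (1 - t) * q) * (1 / q ^ r) ^ M' * Dm q M' nu / autq q nu * proc_prob q r (Suc M') nu mu)"
    for M'
  proof -
    define x where "x = 1 / q ^ Suc M'"
    define C where "C = K * t ^ M' * (1 - t)"
    define G where "G = (\<lambda>nu. proc_prob q r (Suc M') nu mu)"
    have x1: "1 - x \<noteq> 0"
    proof -
      have "q ^ Suc M' > 1" using q by (rule one_less_power) simp
      then show ?thesis unfolding x_def by simp
    qed
    have "(\<Sum>M\<le>M'. f M (M' - M)) = (\<Sum>M\<le>M'. \<Sum>lam\<in>PJ. Dm q M lam * (C / autq q lam * X (Suc M') lam))"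
    proof (rule sum.cong[OF refl])
      fix M assume "M \<in> {..M'}"
      then have MM: "M \<le> M'" by simp
      have tt: "t ^ M * t ^ (M' - M) = t ^ M'" using MM by (simp add: power_add[symmetric])
      have ss: "Suc M + (M' - M) = Suc M'" using MM by simp
      show "f M (M' - M) = (\<Sum>lam\<in>PJ. Dm q M lam * (C / autq q lam * X (Suc M') lam))"
        unfolding f_def a_def C_def ss
      proof (rule sum.cong[OF refl])
        fix lam
        have "K * t ^ M * Dm q M lam / autq q lam * (t ^ (M' - M) * (1 - t) * X (Suc M') lam)
            = Dm q M lam * (K * (t ^ M * t ^ (M' - M)) * (1 - t) / autq q lam * X (Suc M') lam)"
          by (simp add: divide_inverse mult_ac)
        then show "K * t ^ M * Dm q M lam / autq q lam * (t ^ (M' - M) * (1 - t) * X (Suc M') lam)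
            = Dm q M lam * (K * t ^ M' * (1 - t) / autq q lam * X (Suc M') lam)"
          unfolding tt .
      qed
    qed
    also have "\<dots> = (\<Sum>lam\<in>PJ. (\<Sum>M\<le>M'. Dm q M lam) * (C / autq q lam * X (Suc M') lam))"
      by (subst sum.swap) (simp add: sum_distrib_right sum_divide_distrib)
    also have "\<dots> = (\<Sum>lam\<in>PJ. Pp q x (col_len lam 1) * (C / autq q lam * X (Suc M') lam))"
      by (rule sum.cong[OF refl]) (simp add: Dm_partial[OF cpos] x_def)
    also have "\<dots> = C / (1 - x) * (\<Sum>lam\<in>PJ. \<Sum>s\<in>{1..Suc (first_part lam)}.
            Pp q x (col_len lam 1) / autq q lam * (step3_prob q lam s - (if s = 1 then x else 0)) * G (add_box lam s))"
      unfolding sum_distrib_left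
    proof (rule sum.cong[OF refl])
      fix lam
      have Xe: "X (Suc M') lam = (\<Sum>s\<in>{1..Suc (first_part lam)}. (step3_prob q lam s - (if s = 1 then x else 0)) / (1 - x) * G (add_box lam s))"
        unfolding X_def Xs_def G_def x_def by (rule sum.cong[OF refl]) (simp add: step2_alt[OF q])
      show "Pp q x (col_len lam 1) * (C / autq q lam * X (Suc M') lam) =
         (\<Sum>s\<in>{1..Suc (first_part lam)}. C / (1 - x) * (Pp q x (col_len lam 1) / autq q lam * (step3_prob q lam s - (if s = 1 then x else 0)) * G (add_box lam s)))"
        unfolding Xe sum_distrib_left by (rule sum.cong[OF refl]) (simp add: divide_inverse mult_ac)
    qed
    also have "\<dots> = C / (1 - x) * (\<Sum>nu\<in>partitions_of (Suc j). Pp q x (col_len nu 1) * (q ^ col_len nu 1 - 1) / autq q nu * G nu)"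
      unfolding PJ_def by (subst regroup[OF q]) (rule refl)
    also have "\<dots> = (\<Sum>nu\<in>partitions_of (Suc j). (K * (1 - t) * q) * (1 / q ^ r) ^ M' * Dm q M' nu / autq q nu * proc_prob q r (Suc M') nu mu)"
      unfolding sum_distrib_left
    proof (rule sum.cong[OF refl])
      fix nu
      have de: "Pp q x (col_len nu 1) * (q ^ col_len nu 1 - 1) / (1 - x) = q ^ Suc M' * Dm q M' nu"
        unfolding x_def Dm_def by (rule Dm_eq[OF q])
      have tq: "t ^ M' * q ^ Suc M' = q * (1 / q ^ r) ^ M'"
      proof -
        have "t * q = 1 / q ^ r" unfolding t_def using q by simp
        then have "t ^ M' * q ^ M' = (1 / q ^ r) ^ M'" by (metis power_mult_distrib)
        then show ?thesis by (simp add: mult_ac)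
      qed
      have "C / (1 - x) * (Pp q x (col_len nu 1) * (q ^ col_len nu 1 - 1) / autq q nu * G nu)
          = K * (1 - t) * (t ^ M' * (Pp q x (col_len nu 1) * (q ^ col_len nu 1 - 1) / (1 - x))) / autq q nu * G nu"
        unfolding C_def by (simp add: divide_inverse mult_ac)
      also have "\<dots> = K * (1 - t) * (t ^ M' * q ^ Suc M' * Dm q M' nu) / autq q nu * G nu"
        unfolding de by (simp add: mult_ac)
      also have "\<dots> = (K * (1 - t) * q) * (1 / q ^ r) ^ M' * Dm q M' nu / autq q nu * proc_prob q r (Suc M') nu mu"
        unfolding tq G_def by (simp add: mult_ac)
      finally show "C / (1 - x) * (Pp q x (col_len nu 1) * (q ^ col_len nu 1 - 1) / autq q nu * G nu)
          = (K * (1 - t) * q) * (1 / q ^ r) ^ M' * Dm q M' nu / autq q nu * proc_prob q r (Suc M') nu mu" .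
    qed
    finally show ?thesis .
  qed
  show ?thesis
    unfolding t_def[symmetric] PJ_def[symmetric] LHS DR using inner by simp
qed

lemma partitions_of_1: "partitions_of 1 = {[1]}"
proof
  show "partitions_of 1 \<subseteq> {[1]}"
  proof
    fix xs assume a: "xs \<in> partitions_of 1"
    then have z: "0 \<notin> set xs" and s: "sum_list xs = 1" by (auto simp: partitions_of_def)
    have "length xs \<le> 1" using length_le_sum_nz[OF z] s by simp
    moreover have "xs \<noteq> []" using s by auto
    ultimately obtain a where "xs = [a]" by (cases xs) auto
    then show "xs \<in> {[1]}" using s by simp
  qed
  show "{[1]} \<subseteq> partitions_of 1" by (simp add: partitions_of_def)
qed

lemma partitions_of_0: "partitions_of 0 = {[]}"
proof
  show "partitions_of 0 \<subseteq> {[]}"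
  proof
    fix xs assume a: "xs \<in> partitions_of 0"
    then have z: "0 \<notin> set xs" and s: "sum_list xs = 0" by (auto simp: partitions_of_def)
    have "length xs \<le> 0" using length_le_sum_nz[OF z] s by simp
    then show "xs \<in> {[]}" by simp
  qed
  show "{[]} \<subseteq> partitions_of 0" by (simp add: partitions_of_def)
qed

lemma autq_nil: "autq q [] = 1"
  by (simp add: autq_def first_part_def)

lemma autq_one: "(q::real) \<noteq> 0 \<Longrightarrow> autq q [1] = q - 1"
proof -
  assume qn: "q \<noteq> 0"
  have fp: "first_part [1] = 1" by (simp add: first_part_def)
  show ?thesis unfolding autq_def fp
    using qn by (simp add: col_len_def qpoch_inv_def pw_neg algebra_simps)
qed

lemma chain_base:
  assumes q: "q > 1"
  shows "proc_prob q (Suc r) 1 [] mu = (\<Sum>M. \<Sum>lam\<in>partitions_of 1. (q * (1 - 1 / q ^ Suc r)) * (1 / q ^ r) ^ M * Dm q M lam / autq q lam * proc_prob q r (Suc M) lam mu)"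
proof -
  define t where "t = 1 / q ^ Suc r"
  have st: "step2_prob q N [] 1 = 1" if "1 \<le> N" for N
  proof -
    have "q ^ N > 1" using q that by (intro one_less_power) auto
    then show ?thesis by (simp add: step2_prob_def col_len_def)
  qed
  have ab: "add_box [] 1 = [1]" by (simp add: add_box_def col_len_def)
  have X: "Xs q r (1 + k) [] mu = proc_prob q r (Suc k) [1] mu" for k
    using st[of "1 + k"] ab by (simp add: Xs_def first_part_def)
  have "proc_prob q (Suc r) 1 [] mu = (\<Sum>k. t ^ k * (1 - t) * proc_prob q r (Suc k) [1] mu)"
    unfolding proc_Suc X t_def ..
  also have "\<dots> = (\<Sum>M. \<Sum>lam\<in>partitions_of 1. (q * (1 - t)) * (1 / q ^ r) ^ M * Dm q M lam / autq q lam * proc_prob q r (Suc M) lam mu)"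
  proof (rule suminf_cong)
    fix M
    have D: "Dm q M [1] = 1 / q ^ M - 1 / q ^ Suc M"
      by (simp add: Dm_def Pp_def col_len_def)
    have A1: "autq q [1] = q - 1" using q by (intro autq_one) simp
    have qM: "q ^ M > 0" "(q ^ r) ^ M > 0" "q - 1 > 0" using q by auto
    have tM: "t ^ M = 1 / (q ^ M * (q ^ r) ^ M)"
      unfolding t_def by (simp add: power_mult_distrib power_one_over)
    have "(q * (1 - t)) * (1 / q ^ r) ^ M * Dm q M [1] / autq q [1] = t ^ M * (1 - t)"
      unfolding D A1 tM using qM by (simp add: field_simps power_one_over)
    then show "t ^ M * (1 - t) * proc_prob q r (Suc M) [1] mu =
      (\<Sum>lam\<in>partitions_of 1. (q * (1 - t)) * (1 / q ^ r) ^ M * Dm q M lam / autq q lam * proc_prob q r (Suc M) lam mu)"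
      unfolding partitions_of_1 by simp
  qed
  finally show ?thesis unfolding t_def .
qed

definition Zf :: "real \<Rightarrow> nat list \<Rightarrow> nat list \<Rightarrow> real" where
  "Zf q lam mu = (\<Sum>s\<in>{1..Suc (first_part lam)}. step3_prob q lam s * (if add_box lam s = mu then 1 else 0))"

lemma proc0: "proc_prob q 0 N lam mu = Zf q lam mu"
  by (simp add: Zf_def)

lemma final_regroup:
  assumes q: "q > 1" and mu: "mu \<in> partitions_of (Suc j)"
  shows "(\<Sum>lam\<in>partitions_of j. 1 / autq q lam * Zf q lam mu) = (q ^ col_len mu 1 - 1) / autq q mu"
proof -
  have P0: "Pp q 0 m = 1" for m by (simp add: Pp_def)
  have "(\<Sum>lam\<in>partitions_of j. 1 / autq q lam * Zf q lam mu)
      = (\<Sum>lam\<in>partitions_of j. \<Sum>s\<in>{1..Suc (first_part lam)}.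
            Pp q 0 (col_len lam 1) / autq q lam * (step3_prob q lam s - (if s = 1 then 0 else 0)) * (\<lambda>nu. if nu = mu then 1 else 0) (add_box lam s))"
    unfolding Zf_def P0 sum_distrib_left by (rule sum.cong[OF refl], rule sum.cong[OF refl]) (simp add: if_distrib)
  also have "\<dots> = (\<Sum>nu\<in>partitions_of (Suc j). Pp q 0 (col_len nu 1) * (q ^ col_len nu 1 - 1) / autq q nu * (\<lambda>nu. if nu = mu then 1 else 0) nu)"
    by (rule regroup[OF q])
  also have "\<dots> = (q ^ col_len mu 1 - 1) / autq q mu"
    using mu finite_partitions[of "Suc j"] by (simp add: P0 if_distrib sum.delta' cong: if_cong)
  finally show ?thesis .
qed

lemma chain_final:
  assumes q: "q > 1" and mu: "mu \<in> partitions_of (Suc n)" and n: "1 \<le> n"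
  shows "(\<Sum>M. \<Sum>lam\<in>partitions_of n. K * (1 / q ^ 0) ^ M * Dm q M lam / autq q lam * proc_prob q 0 (Suc M) lam mu)
       = K * ((q ^ col_len mu 1 - 1) / autq q mu)"
proof -
  obtain n' where n': "n = Suc n'" using n by (cases n) auto
  have each: "(\<lambda>M. K * Dm q M lam / autq q lam * Zf q lam mu) sums (K * 1 / autq q lam * Zf q lam mu)"
    if "lam \<in> partitions_of n" for lam
  proof -
    have "1 \<le> col_len lam 1" using part_c1_pos[of lam n'] that n' by simp
    then have "(\<lambda>M. Dm q M lam) sums 1" by (rule Dm_sums[OF q])
    then show ?thesis by (intro sums_mult2 sums_divide sums_mult)
  qed
  have "(\<lambda>M. \<Sum>lam\<in>partitions_of n. K * Dm q M lam / autq q lam * Zf q lam mu) sums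
        (\<Sum>lam\<in>partitions_of n. K * 1 / autq q lam * Zf q lam mu)"
    by (rule sums_sum) (use each in blast)
  then have "(\<Sum>M. \<Sum>lam\<in>partitions_of n. K * (1 / q ^ 0) ^ M * Dm q M lam / autq q lam * proc_prob q 0 (Suc M) lam mu)
      = (\<Sum>lam\<in>partitions_of n. K * 1 / autq q lam * Zf q lam mu)"
    unfolding proc0 by (simp add: sums_iff)
  also have "\<dots> = K * (\<Sum>lam\<in>partitions_of n. 1 / autq q lam * Zf q lam mu)"
    by (simp add: sum_distrib_left)
  also have "\<dots> = K * ((q ^ col_len mu 1 - 1) / autq q mu)"
    using final_regroup[OF q mu] by simp
  finally show ?thesis .
qed

lemma proc_formula:
  assumes q: "q > 1"
  shows "\<exists>K. \<forall>mu\<in>partitions_of (Suc n). proc_prob q n 1 [] mu = K * ((q ^ col_len mu 1 - 1) / autq q mu)"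
proof (cases n)
  case 0
  have "proc_prob q 0 1 [] mu = 1 * ((q ^ col_len mu 1 - 1) / autq q mu)" if "mu \<in> partitions_of (Suc 0)" for mu
    using final_regroup[OF q, of mu 0] that unfolding partitions_of_0 proc0 by (simp add: autq_nil)
  then show ?thesis using 0 by blast
next
  case (Suc m)
  have inv: "\<exists>K\<ge>0. \<forall>mu. proc_prob q (Suc m) 1 [] mu =
      (\<Sum>M. \<Sum>lam\<in>partitions_of (Suc i). K * (1 / q ^ (m - i)) ^ M * Dm q M lam / autq q lam * proc_prob q (m - i) (Suc M) lam mu)"
    if "i \<le> m" for i
    using that
  proof (induction i)
    case 0
    have "q * (1 - 1 / q ^ Suc m) \<ge> 0"
    proof -
      have "1 / q ^ Suc m \<le> 1" using q by (simp add: one_le_power del: power_Suc)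
      then show ?thesis using q by simp
    qed
    then show ?case using chain_base[OF q, of m] by auto
  next
    case (Suc i)
    obtain K where K: "K \<ge> 0" and IH: "\<forall>mu. proc_prob q (Suc m) 1 [] mu =
      (\<Sum>M. \<Sum>lam\<in>partitions_of (Suc i). K * (1 / q ^ (m - i)) ^ M * Dm q M lam / autq q lam * proc_prob q (m - i) (Suc M) lam mu)"
      using Suc by auto
    define r where "r = m - Suc i"
    have mi: "m - i = Suc r" using Suc.prems r_def by simp
    define K' where "K' = K * (1 - 1 / q ^ Suc r) * q"
    have K': "K' \<ge> 0"
    proof -
      have "1 / q ^ Suc r \<le> 1" using q by (simp add: one_le_power del: power_Suc)
      then show ?thesis unfolding K'_def using K q by simp
    qed
    have "proc_prob q (Suc m) 1 [] mu =
      (\<Sum>M. \<Sum>lam\<in>partitions_of (Suc (Suc i)). K' * (1 / q ^ (m - Suc i)) ^ M * Dm q M lam / autq q lam * proc_prob q (m - Suc i) (Suc M) lam mu)" for mu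
      using IH chain_step[OF q _ K, of "Suc i" r mu] unfolding mi K'_def r_def[symmetric] by simp
    then show ?case using K' by blast
  qed
  obtain K where K: "\<forall>mu. proc_prob q (Suc m) 1 [] mu =
      (\<Sum>M. \<Sum>lam\<in>partitions_of (Suc m). K * (1 / q ^ 0) ^ M * Dm q M lam / autq q lam * proc_prob q 0 (Suc M) lam mu)"
    using inv[of m] by auto
  have "proc_prob q (Suc m) 1 [] mu = K * ((q ^ col_len mu 1 - 1) / autq q mu)" if "mu \<in> partitions_of (Suc (Suc m))" for mu
    using K chain_final[OF q that, of K] by simp
  then show ?thesis using Suc by blast
qed

lemma prodinf_ne0:
  assumes q: "(q::real) > 1" and u: "0 < u" "u < 1"
  shows "prodinf (\<lambda>r. 1 - u / q ^ Suc r) \<noteq> 0"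
proof (rule prodinf_nonzero)
  have "summable (\<lambda>i. u / q * (1 / q) ^ i)"
    using q by (intro summable_mult summable_geometric) auto
  moreover have "norm ((1 - u / q ^ Suc i) - 1) = u / q * (1 / q) ^ i" for i
    using q u by (simp add: power_one_over)
  ultimately have "summable (\<lambda>i. norm ((1 - u / q ^ Suc i) - 1))" by simp
  then show "convergent_prod (\<lambda>r. 1 - u / q ^ Suc r)"
    by (intro abs_convergent_prod_imp_convergent_prod summable_imp_abs_convergent_prod)
  fix i
  have "1 \<le> q ^ Suc i" using q by (intro one_le_power) simp
  then have "u / q ^ Suc i < 1" using u by (simp add: divide_less_eq)
  then show "1 - u / q ^ Suc i \<noteq> 0" by linarith
qed

theorem theorem3p8:
  fixes q u :: real and n :: nat and mu :: "nat list"
  assumes "q > 1" and "0 < u" and "u < 1"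
    and "mu \<in> partitions_of (Suc n)"
  shows "proc_prob q n 1 [] mu = Nuq u q mu / (\<Sum>nu\<in>partitions_of (Suc n). Nuq u q nu)"
proof -
  have q: "q > 1" by fact
  define w where "w = (\<lambda>nu. (q ^ col_len nu 1 - 1) / autq q nu)"
  define PI where "PI = prodinf (\<lambda>r. 1 - u / q ^ Suc r)"
  define PP where "PP = partitions_of (Suc n)"
  obtain K where K: "\<forall>mu\<in>PP. proc_prob q n 1 [] mu = K * w mu"
    using proc_formula[OF q, of n] unfolding w_def PP_def by blast
  have v: "valid 1 []" by (simp add: valid_def ispart_def col_len_def)
  have "(\<Sum>mu\<in>PP. proc_prob q n 1 [] mu) = 1"
    using proc_sum_one[OF q v, of n] unfolding PP_def by simp
  then have Kw: "K * (\<Sum>nu\<in>PP. w nu) = 1"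
    using K by (simp add: sum_distrib_left)
  have Nu: "Nuq u q nu = PI * u ^ n * w nu" if "nu \<in> PP" for nu
  proof -
    have "sum_list nu - 1 = n" using that by (simp add: PP_def partitions_of_def)
    then show ?thesis unfolding Nuq_def autq_def[symmetric] w_def PI_def by (simp add: mult_ac)
  qed
  have PIn: "PI * u ^ n \<noteq> 0" using prodinf_ne0[OF q assms(2,3)] assms(2) unfolding PI_def by simp
  have "Nuq u q mu / (\<Sum>nu\<in>PP. Nuq u q nu) = (PI * u ^ n * w mu) / (PI * u ^ n * (\<Sum>nu\<in>PP. w nu))"
    using Nu assms(4) unfolding PP_def[symmetric] by (simp add: sum_distrib_left)
  also have "\<dots> = w mu / (\<Sum>nu\<in>PP. w nu)" by (rule mult_divide_mult_cancel_left[OF PIn])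
  also have "\<dots> = K * w mu"
  proof -
    have S: "(\<Sum>nu\<in>PP. w nu) \<noteq> 0" using Kw by auto
    have "K = 1 / (\<Sum>nu\<in>PP. w nu)" using Kw S by (simp add: eq_divide_eq)
    then show ?thesis by simp
  qed
  also have "\<dots> = proc_prob q n 1 [] mu" using K assms(4) unfolding PP_def by simp
  finally show ?thesis unfolding PP_def by simp
qed

end
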